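(* Let $N\ge 1$, let $K^{(1)},\ldots,K^{(N)}$ be positive integers, let $L=\sum_{i=1}^N K^{(i)}$, and let $M\ge 1$. For each $i$, let $P^{(i)}\in\{0,1\}^{K^{(i)}\times M}$ be a row-partial permutation matrix, let $P\in\mathbb{R}^{L\times M}$ be the vertical stacking of $P^{(1)},\ldots,P^{(N)}$, set $Q:=PP^{\top}$ and $C:=-Q$. For $\beta>0$ let $X_\beta$ be the unique solution of the regularized strong SDP $$\min_{X\in\mathbb{R}^{L\times L}}\ \mathrm{Tr}[CX]+\beta^{-1}S(X)\quad\text{subject to}\quad X^{(i,i)}=\mathbf{I}_{K^{(i)}},\ i=1,\ldots,N,\quad X\succeq 0.$$ Then $\lim_{\beta\to\infty}X_\beta=Q$. The same conclusion holds when $X_\beta$ is instead the unique solution of the regularized weak SDP $$\min_{X}\ \mathrm{Tr}[CX]+\beta^{-1}S(X)\quad\text{s.t.}\quad \mathrm{diag}(X)=\mathbf{1}_L,\ \ \mathrm{Tr}\Big[X^{(i,i)}\tfrac{\mathbf{1}_{K^{(i)}}\mathbf{1}_{K^{(i)}}^{\top}}{K^{(i)}}\Big]=1\ (i=1,\ldots,N),\ \ X\succeq 0,$$ or of the regularized GW-type SDP $$\min_{X}\ \mathrm{Tr}[CX]+\beta^{-1}S(X)\quad\text{s.t.}\quad \mathrm{diag}(X)=\mathbf{1}_L,\ \ X\succeq 0.$$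
   Context: A row-partial permutation matrix $P^{(i)}\in\{0,1\}^{K^{(i)}\times M}$ consists of a subset of rows of an $M\times M$ permutation matrix (each row has exactly one $1$, each column at most one $1$). Blocks $X^{(i,j)}\in\mathbb{R}^{K^{(i)}\times K^{(j)}}$ of $X\in\mathbb{R}^{L\times L}$ are indexed conformally with the stacking of the $P^{(i)}$. $\mathbf{1}_n$ denotes the all-ones vector and $\mathbf{I}_n$ the identity. For positive semidefinite $X$, $S(X):=\mathrm{Tr}[X\log X]-\mathrm{Tr}[X]$ (von Neumann entropy functional, with $0\log 0=0$). *)

theory Defs
  imports "Jordan_Normal_Form.Char_Poly" Complex_Main
begin

definition mat_trace :: "real mat \<Rightarrow> real" where
  "mat_trace A = (\<Sum>i<dim_row A. A $$ (i,i))"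

definition row_partial_perm :: "real mat \<Rightarrow> bool" where
  "row_partial_perm A \<longleftrightarrow>
     (\<forall>r < dim_row A. \<forall>c < dim_col A. A $$ (r,c) = 0 \<or> A $$ (r,c) = 1) \<and>
     (\<forall>r < dim_row A. \<exists>!c. c < dim_col A \<and> A $$ (r,c) = 1) \<and>
     (\<forall>c < dim_col A. \<forall>r1 < dim_row A. \<forall>r2 < dim_row A.
        A $$ (r1,c) = 1 \<longrightarrow> A $$ (r2,c) = 1 \<longrightarrow> r1 = r2)"

fun stack_mats :: "(nat \<Rightarrow> real mat) \<Rightarrow> nat \<Rightarrow> nat \<Rightarrow> real mat" where
  "stack_mats Ps M 0 = 0\<^sub>m 0 M"
| "stack_mats Ps M (Suc n) = stack_mats Ps M n @\<^sub>r Ps n"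

definition blk_off :: "(nat \<Rightarrow> nat) \<Rightarrow> nat \<Rightarrow> nat" where
  "blk_off K i = (\<Sum>j<i. K j)"

definition diag_block :: "real mat \<Rightarrow> (nat \<Rightarrow> nat) \<Rightarrow> nat \<Rightarrow> real mat" where
  "diag_block X K i = mat (K i) (K i) (\<lambda>(a,b). X $$ (blk_off K i + a, blk_off K i + b))"

definition psd :: "nat \<Rightarrow> real mat \<Rightarrow> bool" where
  "psd n X \<longleftrightarrow> X \<in> carrier_mat n n \<and> transpose_mat X = X \<and>
     (\<forall>v \<in> carrier_vec n. 0 \<le> v \<bullet> (X *\<^sub>v v))"

text \<open>S(X) = Tr[X log X] - Tr[X], with Tr[X log X] = sum over the eigenvalues
  (roots of the characteristic polynomial, with multiplicity) of lambda log lambda,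
  convention 0 log 0 = 0.\<close>
definition vn_entropy :: "real mat \<Rightarrow> real" where
  "vn_entropy X =
     sum_mset (image_mset (\<lambda>l. if l = 0 then 0 else l * ln l) (proots (char_poly X)))
     - mat_trace X"

definition reg_objective :: "real mat \<Rightarrow> real \<Rightarrow> real mat \<Rightarrow> real" where
  "reg_objective C \<beta> X = mat_trace (C * X) + (1 / \<beta>) * vn_entropy X"

definition strong_feasible :: "nat \<Rightarrow> (nat \<Rightarrow> nat) \<Rightarrow> nat \<Rightarrow> real mat \<Rightarrow> bool" where
  "strong_feasible N K L X \<longleftrightarrow> psd L X \<and> (\<forall>i<N. diag_block X K i = 1\<^sub>m (K i))"

definition weak_feasible :: "nat \<Rightarrow> (nat \<Rightarrow> nat) \<Rightarrow> nat \<Rightarrow> real mat \<Rightarrow> bool" where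
  "weak_feasible N K L X \<longleftrightarrow> psd L X \<and> (\<forall>l<L. X $$ (l,l) = 1) \<and>
     (\<forall>i<N. mat_trace (diag_block X K i *
         ((1 / real (K i)) \<cdot>\<^sub>m mat (K i) (K i) (\<lambda>_. 1))) = 1)"

definition gw_feasible :: "nat \<Rightarrow> real mat \<Rightarrow> bool" where
  "gw_feasible L X \<longleftrightarrow> psd L X \<and> (\<forall>l<L. X $$ (l,l) = 1)"

definition is_minimizer :: "(real mat \<Rightarrow> bool) \<Rightarrow> (real mat \<Rightarrow> real) \<Rightarrow> real mat \<Rightarrow> bool" where
  "is_minimizer F f X \<longleftrightarrow> F X \<and> (\<forall>Y. F Y \<longrightarrow> f X \<le> f Y)"

text \<open>Convergence of a matrix family as beta tends to infinity (entrywise, equivalent to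
  norm convergence in finite dimension).\<close>
definition mat_tendsto_at_top :: "(real \<Rightarrow> real mat) \<Rightarrow> real mat \<Rightarrow> bool" where
  "mat_tendsto_at_top X Q \<longleftrightarrow>
     (\<forall>\<^sub>F \<beta> in at_top. X \<beta> \<in> carrier_mat (dim_row Q) (dim_col Q)) \<and>
     (\<forall>r < dim_row Q. \<forall>c < dim_col Q. ((\<lambda>\<beta>. X \<beta> $$ (r,c)) \<longlongrightarrow> Q $$ (r,c)) at_top)"

end

theory Submission
  imports Defs "Jordan_Normal_Form.Schur_Decomposition"
begin

lemma real_sym_eigen:
  fixes A :: "real mat"
  assumes A: "A \<in> carrier_mat n n" and sym: "A\<^sup>T = A" and n: "n > 0"
  shows "\<exists>l v. v \<in> carrier_vec n \<and> v \<noteq> 0\<^sub>v n \<and> A *\<^sub>v v = l \<cdot>\<^sub>v v"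
proof -
  define Ac where "Ac = map_mat complex_of_real A"
  have Ac: "Ac \<in> carrier_mat n n" using A unfolding Ac_def by auto
  obtain as where cp: "char_poly Ac = (\<Prod>a\<leftarrow>as. [:- a, 1:])" and len: "length as = n"
    using char_poly_factorized[OF Ac] by blast
  define mu where "mu = as ! 0"
  have "mu \<in> set as" using len n unfolding mu_def by auto
  hence "poly (char_poly Ac) mu = 0" unfolding cp
    by (induct as, auto)
  hence "eigenvalue Ac mu" using eigenvalue_root_char_poly[OF Ac] by auto
  then obtain w where w: "eigenvector Ac w mu" unfolding eigenvalue_def by auto
  hence wc: "w \<in> carrier_vec n" and w0: "w \<noteq> 0\<^sub>v n" and ew: "Ac *\<^sub>v w = mu \<cdot>\<^sub>v w"
    unfolding eigenvector_def using Ac by auto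
  define s where "s = (\<Sum>i<n. \<Sum>j<n. cnj (w$i) * complex_of_real (A$$(i,j)) * w$j)"
  define r where "r = (\<Sum>i<n. cnj (w$i) * w$i)"
  have "s = (\<Sum>i<n. cnj (w$i) * (Ac *\<^sub>v w)$i)"
    unfolding s_def
    apply (rule sum.cong[OF refl])
    using A wc by (auto simp: Ac_def scalar_prod_def sum_distrib_left mult.assoc intro!: sum.cong)
  also have "\<dots> = mu * r" unfolding ew r_def using wc
    by (auto simp: sum_distrib_left intro!: sum.cong)
  finally have smr: "s = mu * r" .
  have "cnj s = (\<Sum>i<n. \<Sum>j<n. w$i * complex_of_real (A$$(i,j)) * cnj (w$j))"
    unfolding s_def by (simp add: cnj_sum)
  also have "\<dots> = (\<Sum>j<n. \<Sum>i<n. w$i * complex_of_real (A$$(i,j)) * cnj (w$j))"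
    by (rule sum.swap)
  also have "\<dots> = s" unfolding s_def
  proof (rule sum.cong[OF refl], rule sum.cong[OF refl])
    fix i j assume "i \<in> {..<n}" "j \<in> {..<n}"
    hence "A$$(i,j) = A$$(j,i)" using A sym by (metis carrier_matD index_transpose_mat(1) lessThan_iff)
    thus "w$j * complex_of_real (A$$(j,i)) * cnj (w$i) = cnj (w$i) * complex_of_real (A$$(i,j)) * w$j"
      by (simp add: ac_simps)
  qed
  finally have sreal: "Im s = 0" by (metis Im_complex_of_real complex_cnj_cancel_iff Reals_cnj_iff complex_is_Real_iff)
  have rreal: "r = complex_of_real (\<Sum>i<n. (cmod (w$i))^2)"
    unfolding r_def of_real_sum by (rule sum.cong[OF refl], metis complex_norm_square mult.commute)
  obtain i where i: "i < n" "w$i \<noteq> 0" using w0 wc by (metis carrier_vecD eq_vecI index_zero_vec(1) index_zero_vec(2))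
  have "(cmod (w$i))^2 > 0" using i by auto
  hence rpos: "(\<Sum>i<n. (cmod (w$i))^2) > 0"
    by (metis (no_types, lifting) finite_lessThan i(1) lessThan_iff order_less_le_trans sum_nonneg_leq_bound zero_le_power2 linorder_not_le order_less_irrefl)
  have "Im mu = 0"
  proof -
    have "Im s = Im mu * (\<Sum>i<n. (cmod (w$i))^2)" unfolding smr rreal by simp
    with sreal rpos show ?thesis by simp
  qed
  define l where "l = Re mu"
  have mul: "mu = complex_of_real l" unfolding l_def using \<open>Im mu = 0\<close> by (simp add: complex_eq_iff)
  have "poly (char_poly Ac) mu = 0" using \<open>eigenvalue Ac mu\<close> eigenvalue_root_char_poly[OF Ac] by auto
  hence "complex_of_real (poly (char_poly A) l) = 0"
    unfolding Ac_def of_real_hom.char_poly_hom[OF A] mul by simp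
  hence "poly (char_poly A) l = 0" by simp
  hence "eigenvalue A l" using eigenvalue_root_char_poly[OF A] by auto
  then obtain v where "eigenvector A v l" unfolding eigenvalue_def by auto
  thus ?thesis unfolding eigenvector_def using A by auto
qed

lemma conj_real_vec[simp]: "conjugate (v :: real vec) = v"
  by (rule eq_vecI, auto)

definition orth :: "nat \<Rightarrow> real mat \<Rightarrow> bool" where
  "orth n U \<longleftrightarrow> U \<in> carrier_mat n n \<and> U\<^sup>T * U = 1\<^sub>m n \<and> U * U\<^sup>T = 1\<^sub>m n"

definition diagm :: "nat \<Rightarrow> (nat \<Rightarrow> real) \<Rightarrow> real mat" where
  "diagm n d = mat n n (\<lambda>(i,j). if i = j then d i else 0)"

lemma orth_complete:
  fixes u :: "real vec"
  assumes u: "u \<in> carrier_vec n" and uu: "u \<bullet> u = 1"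
  shows "\<exists>W. orth n W \<and> col W 0 = u"
proof -
  have n: "n \<noteq> 0" using u uu by (cases n) (auto simp: scalar_prod_def)
  have u0: "u \<noteq> 0\<^sub>v n" using uu u by auto
  define b where "b = basis_completion u"
  define ws where "ws = gram_schmidt n b"
  interpret cof_vec_space n "TYPE(real)" .
  from basis_completion[OF u u0, folded b_def]
  have dist_b: "distinct b" 
    and indep: "\<not> lin_dep (set b)" and b: "set b \<subseteq> carrier_vec n" and hdb: "hd b = u" 
    and len_b: "length b = n" by auto
  from hdb len_b n obtain vs where bv: "b = u # vs" by (cases b, auto)
  from gram_schmidt_result[OF b dist_b indep refl, folded ws_def]
  have ws: "set ws \<subseteq> carrier_vec n" "corthogonal ws" "length ws = n" 
    by (auto simp: len_b)
  from gram_schmidt_hd[OF u, of vs, folded bv] have hdws: "hd ws = u" unfolding ws_def .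
  have wsi: "\<And>i. i < n \<Longrightarrow> ws ! i \<in> carrier_vec n" using ws by auto
  have orthw: "\<And>i j. i < n \<Longrightarrow> j < n \<Longrightarrow> (ws!i \<bullet> ws!j = 0) = (i \<noteq> j)"
    using ws(2,3) unfolding corthogonal_def by auto
  define nr where "nr i = sqrt (ws!i \<bullet> ws!i)" for i
  have sqpos: "\<And>i. i < n \<Longrightarrow> ws!i \<bullet> ws!i > 0"
  proof -
    fix i assume i: "i < n"
    have "ws!i \<bullet> ws!i \<ge> 0" unfolding scalar_prod_def by (auto intro: sum_nonneg)
    moreover have "ws!i \<bullet> ws!i \<noteq> 0" using orthw[OF i i] by auto
    ultimately show "ws!i \<bullet> ws!i > 0" by auto
  qed
  have nrpos: "\<And>i. i < n \<Longrightarrow> nr i > 0" unfolding nr_def using sqpos by auto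
  define us where "us = map (\<lambda>i. (1 / nr i) \<cdot>\<^sub>v (ws ! i)) [0..<n]"
  have lus: "length us = n" unfolding us_def by simp
  have usi: "\<And>i. i < n \<Longrightarrow> us ! i = (1 / nr i) \<cdot>\<^sub>v (ws ! i)" unfolding us_def by simp
  have usc: "\<And>i. i < n \<Longrightarrow> us ! i \<in> carrier_vec n" using usi wsi by auto
  have usdot: "\<And>i j. i < n \<Longrightarrow> j < n \<Longrightarrow> us!i \<bullet> us!j = (if i = j then 1 else 0)"
  proof -
    fix i j assume i: "i < n" and j: "j < n"
    have "us!i \<bullet> us!j = (1 / nr i) * (1 / nr j) * (ws!i \<bullet> ws!j)"
      unfolding usi[OF i] usi[OF j] using wsi[OF i] wsi[OF j]
      by (simp add: smult_scalar_prod_distrib scalar_prod_smult_distrib)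
    also have "\<dots> = (if i = j then 1 else 0)"
    proof (cases "i = j")
      case True
      have "nr i * nr i = ws!i \<bullet> ws!i" unfolding nr_def using sqpos[OF i]
        by (simp add: less_imp_le)
      thus ?thesis using True nrpos[OF i] sqpos[OF i] by (simp add: field_simps)
    next
      case False thus ?thesis using orthw[OF i j] by simp
    qed
    finally show "us!i \<bullet> us!j = (if i = j then 1 else 0)" .
  qed
  define W where "W = mat_of_cols n us"
  have W: "W \<in> carrier_mat n n" unfolding W_def using lus by auto
  have WtW: "W\<^sup>T * W = 1\<^sub>m n"
  proof (rule eq_matI)
    fix i j assume i: "i < dim_row (1\<^sub>m n)" and j: "j < dim_col (1\<^sub>m n)"
    hence i: "i < n" and j: "j < n" by auto
    have "(W\<^sup>T * W) $$ (i,j) = col W i \<bullet> col W j" using W i j by auto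
    also have "\<dots> = us!i \<bullet> us!j" unfolding W_def using i j lus usc by simp
    finally show "(W\<^sup>T * W) $$ (i,j) = 1\<^sub>m n $$ (i,j)" using usdot[OF i j] i j by auto
  qed (use W in auto)
  have WWt: "W * W\<^sup>T = 1\<^sub>m n" using mat_mult_left_right_inverse[OF _ W WtW] W by auto
  have "ws ! 0 = u" using hdws ws(3) n by (cases ws, auto)
  moreover have "nr 0 = 1" unfolding nr_def using \<open>ws ! 0 = u\<close> uu by simp
  ultimately have "us ! 0 = u" using usi[of 0] n by auto
  hence "col W 0 = u" unfolding W_def using lus n usc[of 0] by simp
  thus ?thesis using W WtW WWt unfolding orth_def by auto
qed

lemma orth_mult:
  assumes W: "orth n W" and B: "orth n B"
  shows "orth n (W * B)"
proof -
  have Wc: "W \<in> carrier_mat n n" and WtW: "W\<^sup>T * W = 1\<^sub>m n" and WWt: "W * W\<^sup>T = 1\<^sub>m n"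
    using W unfolding orth_def by auto
  have Bc: "B \<in> carrier_mat n n" and BtB: "B\<^sup>T * B = 1\<^sub>m n" and BBt: "B * B\<^sup>T = 1\<^sub>m n"
    using B unfolding orth_def by auto
  have Wt: "W\<^sup>T \<in> carrier_mat n n" and Bt: "B\<^sup>T \<in> carrier_mat n n" using Wc Bc by auto
  have T: "(W * B)\<^sup>T = B\<^sup>T * W\<^sup>T" using transpose_mult[of W n n B n] Wc Bc by simp
  have "(B\<^sup>T * W\<^sup>T) * (W * B) = B\<^sup>T * (W\<^sup>T * (W * B))" by (rule assoc_mult_mat[OF Bt Wt], use Wc Bc in auto)
  also have "W\<^sup>T * (W * B) = (W\<^sup>T * W) * B" by (rule assoc_mult_mat[symmetric, OF Wt Wc Bc])
  also have "\<dots> = B" using WtW Bc by simp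
  finally have 1: "(W * B)\<^sup>T * (W * B) = 1\<^sub>m n" unfolding T using BtB by simp
  have "(W * B) * (B\<^sup>T * W\<^sup>T) = W * (B * (B\<^sup>T * W\<^sup>T))" by (rule assoc_mult_mat[OF Wc Bc], use Wt Bt in auto)
  also have "B * (B\<^sup>T * W\<^sup>T) = (B * B\<^sup>T) * W\<^sup>T" by (rule assoc_mult_mat[symmetric, OF Bc Bt Wt])
  also have "\<dots> = W\<^sup>T" using BBt Wt by simp
  finally have 2: "(W * B) * (W * B)\<^sup>T = 1\<^sub>m n" unfolding T using WWt by simp
  show ?thesis unfolding orth_def using 1 2 Wc Bc by auto
qed

lemma conj_mult:
  fixes W B A :: "real mat"
  assumes W: "W \<in> carrier_mat n n" and B: "B \<in> carrier_mat n n" and A: "A \<in> carrier_mat n n"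
  shows "(W * B)\<^sup>T * A * (W * B) = B\<^sup>T * (W\<^sup>T * A * W) * B"
proof -
  have Wt: "W\<^sup>T \<in> carrier_mat n n" and Bt: "B\<^sup>T \<in> carrier_mat n n" using W B by auto
  have T: "(W * B)\<^sup>T = B\<^sup>T * W\<^sup>T" using transpose_mult[of W n n B n] W B by simp
  have "B\<^sup>T * W\<^sup>T * A * (W * B) = B\<^sup>T * W\<^sup>T * A * W * B"
    using Wt Bt A W B by (simp add: assoc_mult_mat[of _ n n _ n _ n])
  also have "\<dots> = B\<^sup>T * (W\<^sup>T * A * W) * B"
    using Wt Bt A W B by (simp add: assoc_mult_mat[of _ n n _ n _ n])
  finally show ?thesis unfolding T .
qed

lemma orth_block:
  assumes U: "orth n U"
  shows "orth (Suc n) (four_block_mat (1\<^sub>m 1) (0\<^sub>m 1 n) (0\<^sub>m n 1) U)"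
proof -
  have Uc: "U \<in> carrier_mat n n" and UtU: "U\<^sup>T * U = 1\<^sub>m n" and UUt: "U * U\<^sup>T = 1\<^sub>m n"
    using U unfolding orth_def by auto
  define B where "B = four_block_mat (1\<^sub>m 1) (0\<^sub>m 1 n) (0\<^sub>m n 1) U"
  have Bc: "B \<in> carrier_mat (Suc n) (Suc n)" unfolding B_def using Uc by auto
  have Bt: "B\<^sup>T = four_block_mat (1\<^sub>m 1) (0\<^sub>m 1 n) (0\<^sub>m n 1) U\<^sup>T"
    unfolding B_def by (subst transpose_four_block_mat[of _ 1 1 _ n _ n]) (use Uc in auto)
  have "B\<^sup>T * B = four_block_mat (1\<^sub>m 1 * 1\<^sub>m 1 + 0\<^sub>m 1 n * 0\<^sub>m n 1) (1\<^sub>m 1 * 0\<^sub>m 1 n + 0\<^sub>m 1 n * U)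
     (0\<^sub>m n 1 * 1\<^sub>m 1 + U\<^sup>T * 0\<^sub>m n 1) (0\<^sub>m n 1 * 0\<^sub>m 1 n + U\<^sup>T * U)"
    unfolding Bt unfolding B_def
    by (rule mult_four_block_mat) (use Uc in auto)
  also have "\<dots> = four_block_mat (1\<^sub>m 1) (0\<^sub>m 1 n) (0\<^sub>m n 1) (1\<^sub>m n)"
    using Uc UtU by (intro cong_four_block_mat) auto
  also have "\<dots> = 1\<^sub>m (Suc n)" by simp
  finally have 1: "B\<^sup>T * B = 1\<^sub>m (Suc n)" .
  have "B * B\<^sup>T = four_block_mat (1\<^sub>m 1 * 1\<^sub>m 1 + 0\<^sub>m 1 n * 0\<^sub>m n 1) (1\<^sub>m 1 * 0\<^sub>m 1 n + 0\<^sub>m 1 n * U\<^sup>T)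
     (0\<^sub>m n 1 * 1\<^sub>m 1 + U * 0\<^sub>m n 1) (0\<^sub>m n 1 * 0\<^sub>m 1 n + U * U\<^sup>T)"
    unfolding Bt unfolding B_def
    by (rule mult_four_block_mat) (use Uc in auto)
  also have "\<dots> = four_block_mat (1\<^sub>m 1) (0\<^sub>m 1 n) (0\<^sub>m n 1) (1\<^sub>m n)"
    using Uc UUt by (intro cong_four_block_mat) auto
  also have "\<dots> = 1\<^sub>m (Suc n)" by simp
  finally have 2: "B * B\<^sup>T = 1\<^sub>m (Suc n)" .
  show ?thesis using 1 2 Bc unfolding orth_def B_def by auto
qed

lemma block_conj:
  fixes U A3 :: "real mat" and l :: real
  assumes Uc: "U \<in> carrier_mat n n" and A3: "A3 \<in> carrier_mat n n"
  shows "(four_block_mat (1\<^sub>m 1) (0\<^sub>m 1 n) (0\<^sub>m n 1) U)\<^sup>T * four_block_mat (mat 1 1 (\<lambda>_. l)) (0\<^sub>m 1 n) (0\<^sub>m n 1) A3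
     * four_block_mat (1\<^sub>m 1) (0\<^sub>m 1 n) (0\<^sub>m n 1) U
   = four_block_mat (mat 1 1 (\<lambda>_. l)) (0\<^sub>m 1 n) (0\<^sub>m n 1) (U\<^sup>T * A3 * U)"
proof -
  have m1: "mat 1 1 (\<lambda>_. l) \<in> carrier_mat 1 1" by auto
  note [simp] = left_mult_one_mat[OF m1] right_mult_one_mat[OF m1]
  have Bt: "(four_block_mat (1\<^sub>m 1) (0\<^sub>m 1 n) (0\<^sub>m n 1) U)\<^sup>T = four_block_mat (1\<^sub>m 1) (0\<^sub>m 1 n) (0\<^sub>m n 1) U\<^sup>T"
    by (subst transpose_four_block_mat[of _ 1 1 _ n _ n]) (use Uc in auto)
  have "four_block_mat (1\<^sub>m 1) (0\<^sub>m 1 n) (0\<^sub>m n 1) U\<^sup>T * four_block_mat (mat 1 1 (\<lambda>_. l)) (0\<^sub>m 1 n) (0\<^sub>m n 1) A3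
    = four_block_mat (1\<^sub>m 1 * mat 1 1 (\<lambda>_. l) + 0\<^sub>m 1 n * 0\<^sub>m n 1) (1\<^sub>m 1 * 0\<^sub>m 1 n + 0\<^sub>m 1 n * A3)
     (0\<^sub>m n 1 * mat 1 1 (\<lambda>_. l) + U\<^sup>T * 0\<^sub>m n 1) (0\<^sub>m n 1 * 0\<^sub>m 1 n + U\<^sup>T * A3)"
    by (rule mult_four_block_mat) (use Uc A3 in auto)
  also have "\<dots> = four_block_mat (mat 1 1 (\<lambda>_. l)) (0\<^sub>m 1 n) (0\<^sub>m n 1) (U\<^sup>T * A3)"
    using Uc A3 by (intro cong_four_block_mat) auto
  finally have 1: "four_block_mat (1\<^sub>m 1) (0\<^sub>m 1 n) (0\<^sub>m n 1) U\<^sup>T * four_block_mat (mat 1 1 (\<lambda>_. l)) (0\<^sub>m 1 n) (0\<^sub>m n 1) A3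
    = four_block_mat (mat 1 1 (\<lambda>_. l)) (0\<^sub>m 1 n) (0\<^sub>m n 1) (U\<^sup>T * A3)" .
  have "four_block_mat (mat 1 1 (\<lambda>_. l)) (0\<^sub>m 1 n) (0\<^sub>m n 1) (U\<^sup>T * A3) * four_block_mat (1\<^sub>m 1) (0\<^sub>m 1 n) (0\<^sub>m n 1) U
    = four_block_mat (mat 1 1 (\<lambda>_. l) * 1\<^sub>m 1 + 0\<^sub>m 1 n * 0\<^sub>m n 1) (mat 1 1 (\<lambda>_. l) * 0\<^sub>m 1 n + 0\<^sub>m 1 n * U)
     (0\<^sub>m n 1 * 1\<^sub>m 1 + (U\<^sup>T * A3) * 0\<^sub>m n 1) (0\<^sub>m n 1 * 0\<^sub>m 1 n + (U\<^sup>T * A3) * U)"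
    by (rule mult_four_block_mat) (use Uc A3 in auto)
  also have "\<dots> = four_block_mat (mat 1 1 (\<lambda>_. l)) (0\<^sub>m 1 n) (0\<^sub>m n 1) (U\<^sup>T * A3 * U)"
    using Uc A3 by (intro cong_four_block_mat) auto
  finally show ?thesis unfolding Bt 1 .
qed

theorem spectral:
  fixes A :: "real mat"
  assumes "A \<in> carrier_mat n n" and "A\<^sup>T = A"
  shows "\<exists>U d. orth n U \<and> U\<^sup>T * A * U = diagm n d"
  using assms
proof (induction n arbitrary: A)
  case 0
  have "orth 0 (1\<^sub>m 0)" unfolding orth_def by auto
  moreover have "(1\<^sub>m 0)\<^sup>T * A * 1\<^sub>m 0 = diagm 0 (\<lambda>_. 0)"
    by (rule eq_matI) (use 0 in \<open>auto simp: diagm_def\<close>)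
  ultimately show ?case by blast
next
  case (Suc n)
  note A = Suc.prems(1) and sym = Suc.prems(2)
  obtain l v where v: "v \<in> carrier_vec (Suc n)" "v \<noteq> 0\<^sub>v (Suc n)" "A *\<^sub>v v = l \<cdot>\<^sub>v v"
    using real_sym_eigen[OF A sym] by auto
  have vv0: "v \<bullet> v \<noteq> 0"
  proof
    assume "v \<bullet> v = 0"
    hence "(\<Sum>i\<in>{0..<Suc n}. v$i * v$i) = 0" using v by (simp add: scalar_prod_def)
    hence "\<forall>i\<in>{0..<Suc n}. v$i * v$i = 0" by (subst (asm) sum_nonneg_eq_0_iff) auto
    hence "v = 0\<^sub>v (Suc n)" using v(1) by (intro eq_vecI) auto
    with v(2) show False ..
  qed
  have vvpos: "v \<bullet> v > 0"
  proof -
    have "v \<bullet> v \<ge> 0" unfolding scalar_prod_def by (auto intro: sum_nonneg)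
    with vv0 show ?thesis by auto
  qed
  define u where "u = (1 / sqrt (v \<bullet> v)) \<cdot>\<^sub>v v"
  have uc: "u \<in> carrier_vec (Suc n)" unfolding u_def using v by auto
  have uu: "u \<bullet> u = 1" unfolding u_def using v(1) vvpos
    by (simp add: smult_scalar_prod_distrib scalar_prod_smult_distrib)
  have Au: "A *\<^sub>v u = l \<cdot>\<^sub>v u" unfolding u_def using v A
    by (simp add: mult_mat_vec smult_smult_assoc mult.commute)
  obtain W where W: "orth (Suc n) W" and Wu: "col W 0 = u" using orth_complete[OF uc uu] by blast
  have Wc: "W \<in> carrier_mat (Suc n) (Suc n)" and WtW: "W\<^sup>T * W = 1\<^sub>m (Suc n)"
    and WWt: "W * W\<^sup>T = 1\<^sub>m (Suc n)" using W unfolding orth_def by auto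
  define A' where "A' = W\<^sup>T * A * W"
  have A'c: "A' \<in> carrier_mat (Suc n) (Suc n)" unfolding A'_def using Wc A by auto
  have A'sym: "A'\<^sup>T = A'" unfolding A'_def using Wc A sym
    by (simp add: transpose_mult[of _ "Suc n" "Suc n" _ "Suc n"] assoc_mult_mat[of _ "Suc n" "Suc n" _ "Suc n" _ "Suc n"])
  have WW: "\<And>i j. i < Suc n \<Longrightarrow> j < Suc n \<Longrightarrow> col W i \<bullet> col W j = (if i = j then 1 else 0)"
  proof -
    fix i j assume i: "i < Suc n" and j: "j < Suc n"
    have "(W\<^sup>T * W) $$ (i,j) = col W i \<bullet> col W j" using Wc i j by auto
    thus "col W i \<bullet> col W j = (if i = j then 1 else 0)" using WtW i j by auto
  qed
  have cW: "\<And>j. col W j \<in> carrier_vec (Suc n)" using carrier_matD(1)[OF Wc] by (auto intro!: carrier_vecI)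
  have A'0: "A' $$ (i,0) = (if i = 0 then l else 0)" if i: "i < Suc n" for i
  proof -
    have "A' $$ (i,0) = (W\<^sup>T * (A * W)) $$ (i,0)" unfolding A'_def using Wc A
      by (subst assoc_mult_mat[of _ "Suc n" "Suc n" _ "Suc n" _ "Suc n"]) auto
    also have "\<dots> = row W\<^sup>T i \<bullet> col (A * W) 0" using Wc A i by (intro index_mult_mat) auto
    also have "\<dots> = col W i \<bullet> (A *\<^sub>v col W 0)"
    proof -
      have e1: "row W\<^sup>T i = col W i" using Wc i by (intro row_transpose) auto
      have e2: "col (A * W) 0 = A *\<^sub>v col W 0" using Wc A by (intro col_mult2) auto
      show ?thesis unfolding e1 e2 ..
    qed
    also have "\<dots> = col W i \<bullet> (l \<cdot>\<^sub>v col W 0)" unfolding Wu Au ..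
    also have "\<dots> = l * (col W i \<bullet> col W 0)" by (rule scalar_prod_smult_distrib[OF cW cW])
    also have "\<dots> = (if i = 0 then l else 0)" using WW[OF i, of 0] by auto
    finally show ?thesis .
  qed
  have A'0': "\<And>j. j < Suc n \<Longrightarrow> A' $$ (0,j) = (if j = 0 then l else 0)"
  proof -
    fix j assume j: "j < Suc n"
    have "A' $$ (0,j) = A'\<^sup>T $$ (j,0)" using A'c j by auto
    thus "A' $$ (0,j) = (if j = 0 then l else 0)" using A'sym A'0[OF j] by simp
  qed
  define A3 where "A3 = mat n n (\<lambda>(i,j). A' $$ (Suc i, Suc j))"
  have A3c: "A3 \<in> carrier_mat n n" unfolding A3_def by auto
  have A3sym: "A3\<^sup>T = A3"
  proof (rule eq_matI)
    fix i j assume "i < dim_row A3" "j < dim_col A3"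
    hence i: "i < n" and j: "j < n" unfolding A3_def by auto
    have "A' $$ (Suc j, Suc i) = A'\<^sup>T $$ (Suc i, Suc j)" using A'c i j by auto
    thus "A3\<^sup>T $$ (i,j) = A3 $$ (i,j)" using A'sym i j unfolding A3_def by auto
  qed (auto simp: A3_def)
  obtain U3 d3 where U3: "orth n U3" and D3: "U3\<^sup>T * A3 * U3 = diagm n d3"
    using Suc.IH[OF A3c A3sym] by blast
  have U3c: "U3 \<in> carrier_mat n n" using U3 unfolding orth_def by auto
  define B where "B = four_block_mat (1\<^sub>m 1) (0\<^sub>m 1 n) (0\<^sub>m n 1) U3"
  have Bo: "orth (Suc n) B" unfolding B_def by (rule orth_block[OF U3])
  have Bc: "B \<in> carrier_mat (Suc n) (Suc n)" using Bo unfolding orth_def by auto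
  define U where "U = W * B"
  have Uo: "orth (Suc n) U" unfolding U_def by (rule orth_mult[OF W Bo])
  have A'blk: "A' = four_block_mat (mat 1 1 (\<lambda>_. l)) (0\<^sub>m 1 n) (0\<^sub>m n 1) A3"
  proof (rule eq_matI)
    fix i j assume "i < dim_row (four_block_mat (mat 1 1 (\<lambda>_. l)) (0\<^sub>m 1 n) (0\<^sub>m n 1) A3)"
      "j < dim_col (four_block_mat (mat 1 1 (\<lambda>_. l)) (0\<^sub>m 1 n) (0\<^sub>m n 1) A3)"
    hence i: "i < Suc n" and j: "j < Suc n" using A3c by auto
    show "A' $$ (i,j) = four_block_mat (mat 1 1 (\<lambda>_. l)) (0\<^sub>m 1 n) (0\<^sub>m n 1) A3 $$ (i,j)"
    proof (cases "i = 0 \<or> j = 0")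
      case True thus ?thesis using A'0 A'0' i j A3c by auto
    next
      case False
      then obtain i' j' where "i = Suc i'" "j = Suc j'" by (cases i; cases j) auto
      thus ?thesis using i j A3c by (auto simp: A3_def)
    qed
  qed (use A'c A3c in auto)
  have "U\<^sup>T * A * U = B\<^sup>T * A' * B" unfolding U_def A'_def by (rule conj_mult[OF Wc Bc A])
  also have "\<dots> = four_block_mat (mat 1 1 (\<lambda>_. l)) (0\<^sub>m 1 n) (0\<^sub>m n 1) (U3\<^sup>T * A3 * U3)"
    unfolding A'blk B_def by (rule block_conj[OF U3c A3c])
  also have "\<dots> = diagm (Suc n) (\<lambda>i. if i = 0 then l else d3 (i - 1))"
    unfolding D3 by (rule eq_matI) (auto simp: diagm_def)
  finally show ?case using Uo by blast
qed

definition phi :: "real \<Rightarrow> real" where "phi x = (if x = 0 then 0 else x * ln x)"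

lemma orth_entries:
  assumes "orth n U"
  shows "\<And>k l. k < n \<Longrightarrow> l < n \<Longrightarrow> (\<Sum>a<n. U$$(a,k) * U$$(a,l)) = (if k = l then 1 else 0)"
    and "\<And>a b. a < n \<Longrightarrow> b < n \<Longrightarrow> (\<Sum>k<n. U$$(a,k) * U$$(b,k)) = (if a = b then 1 else 0)"
proof -
  have Uc: "U \<in> carrier_mat n n" and 1: "U\<^sup>T * U = 1\<^sub>m n" and 2: "U * U\<^sup>T = 1\<^sub>m n"
    using assms unfolding orth_def by auto
  fix k l assume k: "k < n" and l: "l < n"
  have "(U\<^sup>T * U) $$ (k,l) = (\<Sum>a<n. U$$(a,k) * U$$(a,l))"
    using Uc k l by (simp add: scalar_prod_def atLeast0LessThan)
  thus "(\<Sum>a<n. U$$(a,k) * U$$(a,l)) = (if k = l then 1 else 0)" using 1 k l by simp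
next
  have Uc: "U \<in> carrier_mat n n" and 1: "U\<^sup>T * U = 1\<^sub>m n" and 2: "U * U\<^sup>T = 1\<^sub>m n"
    using assms unfolding orth_def by auto
  fix a b assume a: "a < n" and b: "b < n"
  have "(U * U\<^sup>T) $$ (a,b) = (\<Sum>k<n. U$$(a,k) * U$$(b,k))"
    using Uc a b by (simp add: scalar_prod_def atLeast0LessThan)
  thus "(\<Sum>k<n. U$$(a,k) * U$$(b,k)) = (if a = b then 1 else 0)" using 2 a b by simp
qed

lemma spec_recon:
  assumes U: "orth n U" and X: "X \<in> carrier_mat n n" and D: "U\<^sup>T * X * U = diagm n d"
  shows "X = U * diagm n d * U\<^sup>T"
proof -
  have Uc: "U \<in> carrier_mat n n" and 1: "U\<^sup>T * U = 1\<^sub>m n" and 2: "U * U\<^sup>T = 1\<^sub>m n"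
    using U unfolding orth_def by auto
  have Ut: "U\<^sup>T \<in> carrier_mat n n" using Uc by auto
  have "U * diagm n d * U\<^sup>T = U * (U\<^sup>T * X * U) * U\<^sup>T" unfolding D ..
  also have "\<dots> = (U * U\<^sup>T) * X * (U * U\<^sup>T)"
    using Uc Ut X by (simp add: assoc_mult_mat[of _ n n _ n _ n])
  also have "\<dots> = X" using 2 X by simp
  finally show ?thesis by simp
qed

lemma spec_entry:
  assumes U: "orth n U" and X: "X \<in> carrier_mat n n" and D: "U\<^sup>T * X * U = diagm n d"
    and a: "a < n" and b: "b < n"
  shows "X $$ (a,b) = (\<Sum>k<n. U$$(a,k) * d k * U$$(b,k))"
proof -
  have Uc: "U \<in> carrier_mat n n" using U unfolding orth_def by auto
  have UD: "\<And>j. j < n \<Longrightarrow> (U * diagm n d) $$ (a,j) = U$$(a,j) * d j"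
  proof -
    fix j assume j: "j < n"
    have "(U * diagm n d) $$ (a,j) = (\<Sum>k<n. U$$(a,k) * (if k = j then d k else 0))"
      using Uc a j by (simp add: scalar_prod_def atLeast0LessThan diagm_def)
    also have "\<dots> = (\<Sum>k<n. if k = j then U$$(a,k) * d k else 0)"
      by (rule sum.cong) auto
    also have "\<dots> = U$$(a,j) * d j" using j by (simp add: sum.delta)
    finally show "(U * diagm n d) $$ (a,j) = U$$(a,j) * d j" .
  qed
  have "X $$ (a,b) = (U * diagm n d * U\<^sup>T) $$ (a,b)" using spec_recon[OF U X D] by simp
  also have "\<dots> = (\<Sum>j<n. (U * diagm n d) $$ (a,j) * U$$(b,j))"
    using Uc a b by (simp add: scalar_prod_def atLeast0LessThan diagm_def)
  also have "\<dots> = (\<Sum>k<n. U$$(a,k) * d k * U$$(b,k))"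
    by (rule sum.cong) (auto simp: UD)
  finally show ?thesis .
qed

lemma spec_diag:
  assumes U: "orth n U" and X: "X \<in> carrier_mat n n" and D: "U\<^sup>T * X * U = diagm n d"
    and k: "k < n"
  shows "d k = col U k \<bullet> (X *\<^sub>v col U k)"
proof -
  have Uc: "U \<in> carrier_mat n n" using U unfolding orth_def by auto
  have "d k = (U\<^sup>T * X * U) $$ (k,k)" unfolding D using k by (simp add: diagm_def)
  also have "\<dots> = (U\<^sup>T * (X * U)) $$ (k,k)"
    using Uc X by (simp add: assoc_mult_mat[of _ n n _ n _ n])
  also have "\<dots> = row U\<^sup>T k \<bullet> col (X * U) k" using Uc X k by (intro index_mult_mat) auto
  also have "\<dots> = col U k \<bullet> (X *\<^sub>v col U k)"
  proof -
    have e1: "row U\<^sup>T k = col U k" using Uc k by (intro row_transpose) auto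
    have e2: "col (X * U) k = X *\<^sub>v col U k" using Uc X k by (intro col_mult2) auto
    show ?thesis unfolding e1 e2 ..
  qed
  finally show ?thesis .
qed

lemma spec_charpoly:
  assumes U: "orth n U" and X: "X \<in> carrier_mat n n" and D: "U\<^sup>T * X * U = diagm n d"
  shows "char_poly X = (\<Prod>a\<leftarrow>map d [0..<n]. [:- a, 1:])"
proof -
  have Uc: "U \<in> carrier_mat n n" and 1: "U\<^sup>T * U = 1\<^sub>m n" and 2: "U * U\<^sup>T = 1\<^sub>m n"
    using U unfolding orth_def by auto
  have Dc: "diagm n d \<in> carrier_mat n n" by (simp add: diagm_def)
  have "similar_mat_wit X (diagm n d) U U\<^sup>T"
    unfolding similar_mat_wit_def Let_def using Uc X Dc 1 2 spec_recon[OF U X D] by auto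
  hence "similar_mat X (diagm n d)" unfolding similar_mat_def by blast
  hence "char_poly X = char_poly (diagm n d)" by (rule char_poly_similar)
  also have "\<dots> = (\<Prod>a\<leftarrow>diag_mat (diagm n d). [:- a, 1:])"
    by (rule char_poly_upper_triangular[OF Dc]) (auto simp: upper_triangular_def diagm_def)
  also have "diag_mat (diagm n d) = map d [0..<n]" unfolding diag_mat_def by (auto simp: diagm_def)
  finally show ?thesis .
qed

lemma proots_linear_prod: "proots (\<Prod>a\<leftarrow>(xs :: real list). [:- a, 1:]) = mset xs"
proof (induction xs)
  case Nil thus ?case by simp
next
  case (Cons x xs)
  have "(\<Prod>a\<leftarrow>xs. [:- a, 1:]) \<noteq> 0" by (auto simp: prod_list_zero_iff)
  hence "proots ([:- x, 1:] * (\<Prod>a\<leftarrow>xs. [:- a, 1:])) = proots [:- x, 1:] + proots (\<Prod>a\<leftarrow>xs. [:- a, 1:])"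
    by (intro proots_mult) auto
  thus ?case using Cons by simp
qed

lemma spec_entropy:
  assumes U: "orth n U" and X: "X \<in> carrier_mat n n" and D: "U\<^sup>T * X * U = diagm n d"
  shows "vn_entropy X = (\<Sum>k<n. phi (d k)) - mat_trace X"
proof -
  have "proots (char_poly X) = mset (map d [0..<n])"
    unfolding spec_charpoly[OF U X D] by (rule proots_linear_prod)
  hence "sum_mset (image_mset (\<lambda>l. if l = 0 then 0 else l * ln l) (proots (char_poly X)))
      = (\<Sum>k<n. phi (d k))"
    by (simp add: multiset.map_comp sum_unfold_sum_mset comp_def phi_def atLeast0LessThan)
  thus ?thesis unfolding vn_entropy_def by simp
qed

lemma spec_trace:
  assumes U: "orth n U" and X: "X \<in> carrier_mat n n" and D: "U\<^sup>T * X * U = diagm n d"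
  shows "mat_trace X = (\<Sum>k<n. d k)"
proof -
  have "mat_trace X = (\<Sum>a<n. \<Sum>k<n. U$$(a,k) * d k * U$$(a,k))"
    unfolding mat_trace_def using X spec_entry[OF U X D] by simp
  also have "\<dots> = (\<Sum>k<n. d k * (\<Sum>a<n. U$$(a,k) * U$$(a,k)))"
    by (subst sum.swap) (simp add: sum_distrib_left ac_simps)
  also have "\<dots> = (\<Sum>k<n. d k)" using orth_entries(1)[OF U] by simp
  finally show ?thesis .
qed

lemma sum4_swap:
  "(\<Sum>a\<in>A. \<Sum>b\<in>B. \<Sum>k\<in>C. \<Sum>l\<in>D. f a b k l) = (\<Sum>k\<in>C. \<Sum>l\<in>D. \<Sum>a\<in>A. \<Sum>b\<in>B. f a b k l)"
proof -
  have "(\<Sum>a\<in>A. \<Sum>b\<in>B. \<Sum>k\<in>C. \<Sum>l\<in>D. f a b k l) = (\<Sum>a\<in>A. \<Sum>k\<in>C. \<Sum>b\<in>B. \<Sum>l\<in>D. f a b k l)"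
    by (rule sum.cong[OF refl], rule sum.swap)
  also have "\<dots> = (\<Sum>a\<in>A. \<Sum>k\<in>C. \<Sum>l\<in>D. \<Sum>b\<in>B. f a b k l)"
    by (rule sum.cong[OF refl], rule sum.cong[OF refl], rule sum.swap)
  also have "\<dots> = (\<Sum>k\<in>C. \<Sum>a\<in>A. \<Sum>l\<in>D. \<Sum>b\<in>B. f a b k l)" by (rule sum.swap)
  also have "\<dots> = (\<Sum>k\<in>C. \<Sum>l\<in>D. \<Sum>a\<in>A. \<Sum>b\<in>B. f a b k l)"
    by (rule sum.cong[OF refl], rule sum.swap)
  finally show ?thesis .
qed

lemma spec_frob:
  assumes U: "orth n U" and X: "X \<in> carrier_mat n n" and D: "U\<^sup>T * X * U = diagm n d"
  shows "(\<Sum>a<n. \<Sum>b<n. (X$$(a,b))^2) = (\<Sum>k<n. (d k)^2)"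
proof -
  have "(\<Sum>a<n. \<Sum>b<n. (X$$(a,b))^2) =
     (\<Sum>a<n. \<Sum>b<n. (\<Sum>k<n. U$$(a,k) * d k * U$$(b,k)) * (\<Sum>l<n. U$$(a,l) * d l * U$$(b,l)))"
    using spec_entry[OF U X D] by (simp add: power2_eq_square)
  also have "\<dots> = (\<Sum>a<n. \<Sum>b<n. \<Sum>k<n. \<Sum>l<n. d k * d l * (U$$(a,k) * U$$(a,l)) * (U$$(b,k) * U$$(b,l)))"
    by (simp add: sum_product ac_simps)
  also have "\<dots> = (\<Sum>k<n. \<Sum>l<n. d k * d l * (\<Sum>a<n. U$$(a,k) * U$$(a,l)) * (\<Sum>b<n. U$$(b,k) * U$$(b,l)))"
  proof -
    have "(\<Sum>a<n. \<Sum>b<n. \<Sum>k<n. \<Sum>l<n. d k * d l * (U$$(a,k) * U$$(a,l)) * (U$$(b,k) * U$$(b,l)))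
      = (\<Sum>k<n. \<Sum>l<n. \<Sum>a<n. \<Sum>b<n. d k * d l * (U$$(a,k) * U$$(a,l)) * (U$$(b,k) * U$$(b,l)))"
      by (rule sum4_swap)
    thus ?thesis by (simp add: sum_distrib_left sum_distrib_right ac_simps)
  qed
  also have "\<dots> = (\<Sum>k<n. \<Sum>l<n. if k = l then d k * d l else 0)"
    using orth_entries(1)[OF U] by (intro sum.cong refl) auto
  also have "\<dots> = (\<Sum>k<n. (d k)^2)" by (simp add: power2_eq_square)
  finally show ?thesis .
qed

lemma breg:
  fixes m y T :: real
  assumes m: "0 < m" "m \<le> T" and y: "0 \<le> y" "y \<le> T"
  shows "phi y - phi m - (ln m + 1) * (y - m) \<ge> (y - m)^2 / (2*T)"
proof (cases "y = 0")
  case True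
  have T: "T > 0" using m by auto
  have "m^2 / (2*T) \<le> m"
  proof -
    have "m^2 \<le> m * (2*T)" using m by (simp add: power2_eq_square mult_left_mono)
    thus ?thesis using T by (simp add: divide_le_eq)
  qed
  thus ?thesis using True m by (simp add: phi_def algebra_simps)
next
  case False
  hence yp: "y > 0" using y by auto
  have T: "T > 0" using m by auto
  define g where "g x = x * ln x - m * ln m - (ln m + 1) * (x - m) - (x - m)^2 / (2*T)" for x
  have gm: "g m = 0" unfolding g_def by simp
  have dg: "DERIV g x :> (ln x - ln m - (x - m) / T)" if "x > 0" for x
  proof -
    have d1: "DERIV g x :> (1 * ln x + x * (1 / x) - 0 - (ln m + 1) * (1 - 0) - (2 * (x - m) * (1 - 0)) / (2*T))"
      unfolding g_def using that T
      by (auto intro!: derivative_eq_intros simp: power2_eq_square field_simps)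
    moreover have eq: "(1 * ln x + x * (1 / x) - 0 - (ln m + 1) * (1 - 0) - (2 * (x - m) * (1 - 0)) / (2*T))
       = ln x - ln m - (x - m) / T" using that T by (simp add: field_simps)
    show ?thesis using d1 unfolding eq .
  qed
  have "g y \<ge> 0"
  proof (cases "m \<le> y")
    case True
    have "g m \<le> g y"
    proof (rule DERIV_nonneg_imp_nondecreasing[OF True])
      fix x assume x: "m \<le> x" "x \<le> y"
      have xp: "x > 0" using x m by auto
      have "ln (m / x) \<le> m / x - 1" using xp m by (intro ln_le_minus_one) auto
      hence "ln x - ln m \<ge> 1 - m / x" using xp m by (simp add: ln_div)
      moreover have "1 - m / x = (x - m) / x" using xp by (simp add: field_simps)
      moreover have "(x - m) / x \<ge> (x - m) / T" using x xp y by (intro divide_left_mono) auto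
      ultimately have "ln x - ln m - (x - m) / T \<ge> 0" by linarith
      thus "\<exists>z. DERIV g x :> z \<and> 0 \<le> z" using dg[OF xp] by blast
    qed
    thus ?thesis using gm by simp
  next
    case False
    hence ym: "y \<le> m" by auto
    have "g m \<le> g y"
    proof (rule DERIV_nonpos_imp_nonincreasing[OF ym])
      fix x assume x: "y \<le> x" "x \<le> m"
      have xp: "x > 0" using x yp by auto
      have "ln (x / m) \<le> x / m - 1" using xp m by (intro ln_le_minus_one) auto
      hence "ln x - ln m \<le> (x - m) / m" using xp m by (simp add: ln_div field_simps)
      moreover have "(x - m) / m \<le> (x - m) / T"
      proof -
        have "(m - x) / T \<le> (m - x) / m" using x m by (intro divide_left_mono) auto
        thus ?thesis by (metis minus_diff_eq minus_divide_left neg_le_iff_le)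
      qed
      ultimately have "ln x - ln m - (x - m) / T \<le> 0" by linarith
      thus "\<exists>z. DERIV g x :> z \<and> z \<le> 0" using dg[OF xp] by blast
    qed
    thus ?thesis using gm by simp
  qed
  thus ?thesis using yp m unfolding g_def phi_def by (simp add: algebra_simps)
qed

lemma class_sq_nonneg:
  fixes f :: "nat \<Rightarrow> real" and p :: "nat \<Rightarrow> 'c"
  shows "(\<Sum>a<n. \<Sum>b<n. if p a = p b then f a * f b else 0) \<ge> 0"
proof -
  let ?S = "p ` {..<n}"
  have "(\<Sum>s\<in>?S. (\<Sum>a<n. if p a = s then f a else 0)^2)
     = (\<Sum>s\<in>?S. \<Sum>a<n. \<Sum>b<n. (if p a = s then f a else 0) * (if p b = s then f b else 0))"
    by (simp add: power2_eq_square sum_product)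
  also have "\<dots> = (\<Sum>a<n. \<Sum>s\<in>?S. \<Sum>b<n. (if p a = s then f a else 0) * (if p b = s then f b else 0))"
    by (rule sum.swap)
  also have "\<dots> = (\<Sum>a<n. \<Sum>b<n. \<Sum>s\<in>?S. (if p a = s then f a else 0) * (if p b = s then f b else 0))"
    by (rule sum.cong[OF refl], rule sum.swap)
  also have "\<dots> = (\<Sum>a<n. \<Sum>b<n. if p a = p b then f a * f b else 0)"
  proof (rule sum.cong[OF refl], rule sum.cong[OF refl])
    fix a b assume a: "a \<in> {..<n}" and "b \<in> {..<n}"
    have "(\<Sum>s\<in>?S. (if p a = s then f a else 0) * (if p b = s then f b else 0))
       = (\<Sum>s\<in>?S. if s = p a then (if p b = p a then f a * f b else 0) else 0)"
      by (rule sum.cong) auto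
    also have "\<dots> = (if p a = p b then f a * f b else 0)" using a by (simp add: sum.delta' eq_commute)
    finally show "(\<Sum>s\<in>?S. (if p a = s then f a else 0) * (if p b = s then f b else 0))
       = (if p a = p b then f a * f b else 0)" .
  qed
  finally have eq: "(\<Sum>s\<in>?S. (\<Sum>a<n. if p a = s then f a else 0)^2) = (\<Sum>a<n. \<Sum>b<n. if p a = p b then f a * f b else 0)" .
  have "(\<Sum>s\<in>?S. (\<Sum>a<n. if p a = s then f a else 0)^2) \<ge> 0" by (intro sum_nonneg) auto
  thus ?thesis unfolding eq .
qed

lemma orth_class_sum:
  fixes f :: "nat \<Rightarrow> real" and p :: "nat \<Rightarrow> 'c"
  assumes W: "orth n W"
  shows "(\<Sum>k<n. \<Sum>a<n. \<Sum>b<n. if p a = p b then (W$$(a,k) * f a) * (W$$(b,k) * f b) else 0) = (\<Sum>a<n. (f a)^2)"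
proof -
  have "(\<Sum>k<n. \<Sum>a<n. \<Sum>b<n. if p a = p b then (W$$(a,k) * f a) * (W$$(b,k) * f b) else 0)
    = (\<Sum>a<n. \<Sum>k<n. \<Sum>b<n. if p a = p b then (W$$(a,k) * f a) * (W$$(b,k) * f b) else 0)"
    by (rule sum.swap)
  also have "\<dots> = (\<Sum>a<n. \<Sum>b<n. \<Sum>k<n. if p a = p b then (W$$(a,k) * f a) * (W$$(b,k) * f b) else 0)"
    by (rule sum.cong[OF refl], rule sum.swap)
  also have "\<dots> = (\<Sum>a<n. \<Sum>b<n. if p a = p b then f a * f b * (\<Sum>k<n. W$$(a,k) * W$$(b,k)) else 0)"
    by (intro sum.cong refl) (auto simp: sum_distrib_left ac_simps)
  also have "\<dots> = (\<Sum>a<n. \<Sum>b<n. if b = a then f a * f a else 0)"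
    using orth_entries(2)[OF W] by (intro sum.cong refl) auto
  also have "\<dots> = (\<Sum>a<n. (f a)^2)" by (simp add: power2_eq_square)
  finally show ?thesis .
qed

lemma spec_diag2:
  assumes U: "orth n U" and X: "X \<in> carrier_mat n n" and D: "U\<^sup>T * X * U = diagm n d"
    and k: "k < n"
  shows "d k = (\<Sum>a<n. \<Sum>b<n. U$$(a,k) * X$$(a,b) * U$$(b,k))"
proof -
  have Uc: "U \<in> carrier_mat n n" using U unfolding orth_def by auto
  have "d k = col U k \<bullet> (X *\<^sub>v col U k)" by (rule spec_diag[OF U X D k])
  also have "\<dots> = (\<Sum>a<n. U$$(a,k) * (\<Sum>b<n. X$$(a,b) * U$$(b,k)))"
    using Uc X k by (simp add: scalar_prod_def atLeast0LessThan)
  also have "\<dots> = (\<Sum>a<n. \<Sum>b<n. U$$(a,k) * X$$(a,b) * U$$(b,k))"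
    by (simp add: sum_distrib_left ac_simps)
  finally show ?thesis .
qed

lemma jensen_k:
  fixes c d :: "nat \<Rightarrow> real"
  assumes c: "\<And>j. j < n \<Longrightarrow> 0 \<le> c j" and c1: "(\<Sum>j<n. c j) = 1"
    and d: "\<And>j. j < n \<Longrightarrow> 0 \<le> d j \<and> d j \<le> T"
    and m: "m = (\<Sum>j<n. c j * d j)" and mT: "0 \<le> m" "m \<le> T"
  shows "phi m + (1/(2*T)) * (\<Sum>j<n. c j * (d j)^2) \<le> (\<Sum>j<n. c j * phi (d j)) + (1/(2*T)) * m^2"
proof (cases "m = 0")
  case True
  have "\<forall>j\<in>{..<n}. c j * d j = 0"
    using m True c d by (subst sum_nonneg_eq_0_iff[symmetric]) auto
  hence z: "\<And>j. j < n \<Longrightarrow> c j = 0 \<or> d j = 0" by auto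
  have "(\<Sum>j<n. c j * (d j)^2) = 0" using z by (intro sum.neutral) auto
  moreover have "(\<Sum>j<n. c j * phi (d j)) = 0" using z by (intro sum.neutral) (auto simp: phi_def)
  ultimately show ?thesis using True by (simp add: phi_def)
next
  case False
  hence mp: "m > 0" using mT by auto
  have T: "T > 0" using mp mT by auto
  have "(\<Sum>j<n. c j * ((d j - m)^2 / (2*T))) \<le> (\<Sum>j<n. c j * (phi (d j) - phi m - (ln m + 1) * (d j - m)))"
    using breg[OF mp mT(2)] c d by (intro sum_mono mult_left_mono) auto
  moreover have "(\<Sum>j<n. c j * (phi (d j) - phi m - (ln m + 1) * (d j - m)))
     = (\<Sum>j<n. c j * phi (d j)) - phi m * (\<Sum>j<n. c j) - (ln m + 1) * ((\<Sum>j<n. c j * d j) - m * (\<Sum>j<n. c j))"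
    by (simp add: algebra_simps sum_subtractf sum_distrib_left sum.distrib)
  moreover have "(\<Sum>j<n. c j * ((d j - m)^2 / (2*T)))
     = (1/(2*T)) * ((\<Sum>j<n. c j * (d j)^2) - 2 * m * (\<Sum>j<n. c j * d j) + m^2 * (\<Sum>j<n. c j))"
    by (simp add: algebra_simps power2_eq_square sum_subtractf sum_distrib_left sum.distrib sum_divide_distrib add_divide_distrib diff_divide_distrib)
  ultimately have "(1/(2*T)) * ((\<Sum>j<n. c j * (d j)^2) - 2 * m * m + m^2)
     \<le> (\<Sum>j<n. c j * phi (d j)) - phi m" using c1 m[symmetric] by simp
  thus ?thesis by (simp add: power2_eq_square algebra_simps)
qed

lemma sum3_swap:
  "(\<Sum>a\<in>A. \<Sum>b\<in>B. \<Sum>k\<in>C. f a b k) = (\<Sum>k\<in>C. \<Sum>a\<in>A. \<Sum>b\<in>B. f a b k)"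
proof -
  have "(\<Sum>a\<in>A. \<Sum>b\<in>B. \<Sum>k\<in>C. f a b k) = (\<Sum>a\<in>A. \<Sum>k\<in>C. \<Sum>b\<in>B. f a b k)"
    by (rule sum.cong[OF refl], rule sum.swap)
  also have "\<dots> = (\<Sum>k\<in>C. \<Sum>a\<in>A. \<Sum>b\<in>B. f a b k)" by (rule sum.swap)
  finally show ?thesis .
qed

lemma pinch_ineq:
  fixes X Z U V :: "real mat" and d z :: "nat \<Rightarrow> real" and p :: "nat \<Rightarrow> 'c"
  assumes U: "orth n U" and X: "X \<in> carrier_mat n n" and DU: "U\<^sup>T * X * U = diagm n d"
    and V: "orth n V" and Z: "Z \<in> carrier_mat n n" and DV: "V\<^sup>T * Z * V = diagm n z"
    and Zdef: "\<And>a b. a < n \<Longrightarrow> b < n \<Longrightarrow> Z$$(a,b) = (if p a = p b then X$$(a,b) else 0)"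
    and d: "\<And>j. j < n \<Longrightarrow> 0 \<le> d j \<and> d j \<le> T"
    and z: "\<And>k. k < n \<Longrightarrow> 0 \<le> z k \<and> z k \<le> T"
  shows "(\<Sum>k<n. phi (z k)) + (1/(2*T)) * (\<Sum>j<n. (d j)^2) \<le> (\<Sum>j<n. phi (d j)) + (1/(2*T)) * (\<Sum>k<n. (z k)^2)"
proof -
  define c where "c k j = (\<Sum>a<n. \<Sum>b<n. if p a = p b then (V$$(a,k) * U$$(a,j)) * (V$$(b,k) * U$$(b,j)) else 0)" for k j
  have c0: "c k j \<ge> 0" for k j unfolding c_def by (rule class_sq_nonneg)
  have crow: "(\<Sum>j<n. c k j) = 1" if k: "k < n" for k
  proof -
    have "(\<Sum>j<n. c k j) = (\<Sum>j<n. \<Sum>a<n. \<Sum>b<n. if p a = p b then (U$$(a,j) * V$$(a,k)) * (U$$(b,j) * V$$(b,k)) else 0)"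
      unfolding c_def by (intro sum.cong refl) (simp add: mult.commute)
    also have "\<dots> = (\<Sum>a<n. (V$$(a,k))^2)" by (rule orth_class_sum[OF U])
    also have "\<dots> = 1" using orth_entries(1)[OF V k k] by (simp add: power2_eq_square)
    finally show ?thesis .
  qed
  have ccol: "(\<Sum>k<n. c k j) = 1" if j: "j < n" for j
  proof -
    have "(\<Sum>k<n. c k j) = (\<Sum>k<n. \<Sum>a<n. \<Sum>b<n. if p a = p b then (V$$(a,k) * U$$(a,j)) * (V$$(b,k) * U$$(b,j)) else 0)"
      unfolding c_def by simp
    also have "\<dots> = (\<Sum>a<n. (U$$(a,j))^2)" by (rule orth_class_sum[OF V])
    also have "\<dots> = 1" using orth_entries(1)[OF U j j] by (simp add: power2_eq_square)
    finally show ?thesis .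
  qed
  have zc: "z k = (\<Sum>j<n. c k j * d j)" if k: "k < n" for k
  proof -
    have "z k = (\<Sum>a<n. \<Sum>b<n. V$$(a,k) * Z$$(a,b) * V$$(b,k))" by (rule spec_diag2[OF V Z DV k])
    also have "\<dots> = (\<Sum>a<n. \<Sum>b<n. \<Sum>j<n. if p a = p b then d j * ((V$$(a,k) * U$$(a,j)) * (V$$(b,k) * U$$(b,j))) else 0)"
    proof (intro sum.cong refl)
      fix a b assume a: "a \<in> {..<n}" and b: "b \<in> {..<n}"
      show "V$$(a,k) * Z$$(a,b) * V$$(b,k) = (\<Sum>j<n. if p a = p b then d j * ((V$$(a,k) * U$$(a,j)) * (V$$(b,k) * U$$(b,j))) else 0)"
      proof (cases "p a = p b")
        case True
        have "V$$(a,k) * Z$$(a,b) * V$$(b,k) = V$$(a,k) * (\<Sum>j<n. U$$(a,j) * d j * U$$(b,j)) * V$$(b,k)"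
          using Zdef a b True spec_entry[OF U X DU] by simp
        also have "\<dots> = (\<Sum>j<n. d j * ((V$$(a,k) * U$$(a,j)) * (V$$(b,k) * U$$(b,j))))"
          by (simp add: sum_distrib_left sum_distrib_right ac_simps)
        finally show ?thesis using True by simp
      next
        case False thus ?thesis using Zdef a b by simp
      qed
    qed
    also have "\<dots> = (\<Sum>j<n. \<Sum>a<n. \<Sum>b<n. if p a = p b then d j * ((V$$(a,k) * U$$(a,j)) * (V$$(b,k) * U$$(b,j))) else 0)"
      by (rule sum3_swap)
    also have "\<dots> = (\<Sum>j<n. c k j * d j)"
      unfolding c_def by (intro sum.cong refl) (auto simp: sum_distrib_right intro!: sum.cong)
    finally show ?thesis .
  qed
  have swapc: "(\<Sum>k<n. \<Sum>j<n. c k j * g j) = (\<Sum>j<n. g j)" for g :: "nat \<Rightarrow> real"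
  proof -
    have "(\<Sum>k<n. \<Sum>j<n. c k j * g j) = (\<Sum>j<n. \<Sum>k<n. c k j * g j)" by (rule sum.swap)
    also have "\<dots> = (\<Sum>j<n. g j * (\<Sum>k<n. c k j))" by (simp add: sum_distrib_left ac_simps)
    also have "\<dots> = (\<Sum>j<n. g j)" using ccol by simp
    finally show ?thesis .
  qed
  have each: "phi (z k) + (1/(2*T)) * (\<Sum>j<n. c k j * (d j)^2) \<le> (\<Sum>j<n. c k j * phi (d j)) + (1/(2*T)) * (z k)^2"
    if k: "k < n" for k
    by (rule jensen_k[OF _ crow[OF k] d zc[OF k]]) (use c0 z[OF k] in auto)
  have "(\<Sum>k<n. phi (z k) + (1/(2*T)) * (\<Sum>j<n. c k j * (d j)^2)) \<le> (\<Sum>k<n. (\<Sum>j<n. c k j * phi (d j)) + (1/(2*T)) * (z k)^2)"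
    using each by (intro sum_mono) auto
  hence "(\<Sum>k<n. phi (z k)) + (1/(2*T)) * (\<Sum>k<n. \<Sum>j<n. c k j * (d j)^2) \<le> (\<Sum>k<n. \<Sum>j<n. c k j * phi (d j)) + (1/(2*T)) * (\<Sum>k<n. (z k)^2)"
    by (simp add: sum.distrib sum_distrib_left)
  thus ?thesis unfolding swapc .
qed

lemma append_rows_index:
  assumes A: "A \<in> carrier_mat nr1 nc" and B: "B \<in> carrier_mat nr2 nc"
    and i: "i < nr1 + nr2" and j: "j < nc"
  shows "(A @\<^sub>r B) $$ (i,j) = (if i < nr1 then A $$ (i,j) else B $$ (i - nr1, j))"
  unfolding append_rows_def using A B i j by (subst index_mat_four_block) auto

lemma blk_off_Suc: "blk_off K (Suc i) = blk_off K i + K i"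
  unfolding blk_off_def by simp

lemma blk_off_mono: "i \<le> j \<Longrightarrow> blk_off K i \<le> blk_off K j"
  unfolding blk_off_def by (intro sum_mono2) auto

lemma stack_carrier:
  assumes "\<forall>i<n. Ps i \<in> carrier_mat (K i) M"
  shows "stack_mats Ps M n \<in> carrier_mat (\<Sum>i<n. K i) M"
  using assms by (induction n) auto

lemma stack_index:
  assumes "\<forall>i<n. Ps i \<in> carrier_mat (K i) M" and "i < n" and "a < K i" and "c < M"
  shows "stack_mats Ps M n $$ (blk_off K i + a, c) = Ps i $$ (a, c)"
  using assms
proof (induction n)
  case 0 thus ?case by simp
next
  case (Suc n)
  have S: "stack_mats Ps M n \<in> carrier_mat (\<Sum>i<n. K i) M" using Suc.prems(1) by (intro stack_carrier) auto
  have Pn: "Ps n \<in> carrier_mat (K n) M" using Suc.prems(1) by auto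
  have off: "blk_off K n = (\<Sum>i<n. K i)" unfolding blk_off_def ..
  show ?case
  proof (cases "i < n")
    case True
    have "blk_off K i + a < blk_off K (Suc i)" using Suc.prems(3) by (simp add: blk_off_Suc)
    also have "\<dots> \<le> blk_off K n" using True by (intro blk_off_mono) auto
    finally have lt: "blk_off K i + a < (\<Sum>i<n. K i)" unfolding off .
    have "stack_mats Ps M (Suc n) $$ (blk_off K i + a, c) = stack_mats Ps M n $$ (blk_off K i + a, c)"
      using append_rows_index[OF S Pn _ Suc.prems(4), of "blk_off K i + a"] lt by simp
    also have "\<dots> = Ps i $$ (a, c)" using Suc.IH Suc.prems True by auto
    finally show ?thesis .
  next
    case False
    hence i: "i = n" using Suc.prems(2) by auto
    have "stack_mats Ps M (Suc n) $$ (blk_off K i + a, c) = Ps n $$ (a, c)"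
      using append_rows_index[OF S Pn _ Suc.prems(4), of "blk_off K i + a"] Suc.prems(3) i off by simp
    thus ?thesis using i by simp
  qed
qed

lemma blk_decomp:
  assumes "r < (\<Sum>i<n. K i)"
  shows "\<exists>i<n. \<exists>a<K i. r = blk_off K i + a"
  using assms
proof (induction n)
  case 0 thus ?case by simp
next
  case (Suc n)
  show ?case
  proof (cases "r < (\<Sum>i<n. K i)")
    case True thus ?thesis using Suc.IH by (meson less_SucI)
  next
    case False
    have off: "blk_off K n = (\<Sum>i<n. K i)" unfolding blk_off_def ..
    have "r - blk_off K n < K n" using Suc.prems False off by simp
    moreover have "r = blk_off K n + (r - blk_off K n)" using False off by simp
    ultimately show ?thesis by blast
  qed
qed

lemma blk_lt:
  assumes "i < n" "a < K i"
  shows "blk_off K i + a < (\<Sum>i<n. K i)"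
proof -
  have "blk_off K i + a < blk_off K (Suc i)" using assms by (simp add: blk_off_Suc)
  also have "\<dots> \<le> blk_off K n" using assms by (intro blk_off_mono) auto
  finally show ?thesis unfolding blk_off_def .
qed

lemma rpp_facts:
  assumes A: "A \<in> carrier_mat k m" and R: "row_partial_perm A"
  shows "\<forall>r<k. \<forall>c<m. A $$ (r,c) = 0 \<or> A $$ (r,c) = 1"
    and "\<forall>r<k. \<exists>!c. c < m \<and> A $$ (r,c) = 1"
    and "\<forall>c<m. \<forall>r1<k. \<forall>r2<k. A $$ (r1,c) = 1 \<longrightarrow> A $$ (r2,c) = 1 \<longrightarrow> r1 = r2"
proof -
  have d: "dim_row A = k" "dim_col A = m" using A by auto
  note R' = R[unfolded row_partial_perm_def d]
  show "\<forall>r<k. \<forall>c<m. A $$ (r,c) = 0 \<or> A $$ (r,c) = 1" using R' by (elim conjE)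
  show "\<forall>r<k. \<exists>!c. c < m \<and> A $$ (r,c) = 1" using R' by (elim conjE)
  show "\<forall>c<m. \<forall>r1<k. \<forall>r2<k. A $$ (r1,c) = 1 \<longrightarrow> A $$ (r2,c) = 1 \<longrightarrow> r1 = r2" using R' by (elim conjE)
qed

lemma class_fun:
  assumes Ps: "\<forall>i<N. Ps i \<in> carrier_mat (K i) M \<and> row_partial_perm (Ps i)"
  defines "L \<equiv> (\<Sum>i<N. K i)"
    and "Q \<equiv> stack_mats Ps M N * transpose_mat (stack_mats Ps M N)"
  shows "\<exists>cl :: nat \<Rightarrow> nat. Q \<in> carrier_mat L L \<and> (\<forall>r<L. \<forall>s<L. Q $$ (r,s) = (if cl r = cl s then 1 else 0))
     \<and> (\<forall>i<N. \<forall>a<K i. \<forall>b<K i. a \<noteq> b \<longrightarrow> cl (blk_off K i + a) \<noteq> cl (blk_off K i + b))"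
proof -
  define P where "P = stack_mats Ps M N"
  have Pc: "P \<in> carrier_mat L M" unfolding P_def L_def using Ps by (intro stack_carrier) auto
  have Pidx: "\<And>i a c. i < N \<Longrightarrow> a < K i \<Longrightarrow> c < M \<Longrightarrow> P $$ (blk_off K i + a, c) = Ps i $$ (a, c)"
    unfolding P_def using Ps by (intro stack_index) auto
  have rowP: "(\<forall>c<M. P$$(r,c) = 0 \<or> P$$(r,c) = 1) \<and> (\<exists>!c. c < M \<and> P$$(r,c) = 1)" if r: "r < L" for r
  proof -
    obtain i a where i: "i < N" and a: "a < K i" and ra: "r = blk_off K i + a"
      using blk_decomp[OF r[unfolded L_def]] by blast
    have Pi: "Ps i \<in> carrier_mat (K i) M" "row_partial_perm (Ps i)" using Ps i by auto
    have e: "\<And>c. c < M \<Longrightarrow> P$$(r,c) = Ps i $$ (a,c)" using Pidx i a ra by simp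
    have 1: "\<forall>c<M. Ps i $$ (a,c) = 0 \<or> Ps i $$ (a,c) = 1" using rpp_facts(1)[OF Pi] a by blast
    have 2: "\<exists>!c. c < M \<and> Ps i $$ (a,c) = 1" using rpp_facts(2)[OF Pi] a by blast
    then obtain c0 where c0: "c0 < M" "Ps i $$ (a,c0) = 1" and u: "\<And>c. c < M \<Longrightarrow> Ps i $$ (a,c) = 1 \<Longrightarrow> c = c0"
      by blast
    have A: "\<forall>c<M. P$$(r,c) = 0 \<or> P$$(r,c) = 1" using 1 e by simp
    have B: "\<exists>!c. c < M \<and> P$$(r,c) = 1"
    proof (rule ex1I[of _ c0])
      show "c0 < M \<and> P$$(r,c0) = 1" using c0 e by simp
    next
      fix c assume "c < M \<and> P$$(r,c) = 1"
      thus "c = c0" using u e by auto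
    qed
    show ?thesis using A B by blast
  qed
  define cl where "cl r = (THE c. c < M \<and> P$$(r,c) = 1)" for r
  have cl: "cl r < M \<and> P$$(r, cl r) = 1" if "r < L" for r
    unfolding cl_def by (rule theI'[OF conjunct2[OF rowP[OF that]]])
  have Pcl: "P$$(r,c) = (if c = cl r then 1 else 0)" if "r < L" "c < M" for r c
  proof (cases "c = cl r")
    case True thus ?thesis using cl[OF that(1)] by simp
  next
    case False
    have "P$$(r,c) \<noteq> 1"
    proof
      assume P1: "P$$(r,c) = 1"
      have "cl r = c" unfolding cl_def
        by (rule the1_equality[OF conjunct2[OF rowP[OF that(1)]]]) (simp add: that(2) P1)
      hence "c = cl r" by simp
      thus False using False by simp
    qed
    moreover have "P$$(r,c) = 0 \<or> P$$(r,c) = 1" using conjunct1[OF rowP[OF that(1)]] that(2) by simp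
    ultimately show ?thesis using False by simp
  qed
  have Qc: "Q \<in> carrier_mat L L" unfolding Q_def P_def[symmetric] using Pc by auto
  have Qe: "Q $$ (r,s) = (if cl r = cl s then 1 else 0)" if r: "r < L" and s: "s < L" for r s
  proof -
    have "Q $$ (r,s) = (\<Sum>c<M. P$$(r,c) * P$$(s,c))"
      unfolding Q_def P_def[symmetric] using Pc r s by (simp add: scalar_prod_def atLeast0LessThan)
    also have "\<dots> = (\<Sum>c<M. if c = cl r then (if cl s = cl r then 1 else 0) else 0)"
    proof (rule sum.cong[OF refl])
      fix c assume "c \<in> {..<M}"
      hence c: "c < M" by simp
      show "P$$(r,c) * P$$(s,c) = (if c = cl r then (if cl s = cl r then 1 else 0) else 0)"
        unfolding Pcl[OF r c] Pcl[OF s c] by simp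
    qed
    also have "\<dots> = (if cl s = cl r then 1 else 0)" using cl[OF r] by (simp add: sum.delta)
    also have "\<dots> = (if cl r = cl s then 1 else 0)" by (cases "cl r = cl s") auto
    finally show ?thesis .
  qed
  have dist: "cl (blk_off K i + a) \<noteq> cl (blk_off K i + b)"
    if i: "i < N" and a: "a < K i" and b: "b < K i" and ab: "a \<noteq> b" for i a b
  proof
    assume eq: "cl (blk_off K i + a) = cl (blk_off K i + b)"
    have ra: "blk_off K i + a < L" and rb: "blk_off K i + b < L" unfolding L_def using i a b blk_lt by auto
    define c where "c = cl (blk_off K i + a)"
    have c: "c < M" using cl[OF ra] unfolding c_def by auto
    have A1: "Ps i $$ (a,c) = 1" using cl[OF ra] Pidx[OF i a c] unfolding c_def by simp
    have B1: "Ps i $$ (b,c) = 1" using cl[OF rb] Pidx[OF i b c] eq unfolding c_def by simp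
    have Pi: "Ps i \<in> carrier_mat (K i) M" "row_partial_perm (Ps i)" using Ps i by auto
    have "\<forall>c<M. \<forall>r1<K i. \<forall>r2<K i. Ps i $$ (r1,c) = 1 \<longrightarrow> Ps i $$ (r2,c) = 1 \<longrightarrow> r1 = r2"
      by (rule rpp_facts(3)[OF Pi])
    hence "a = b" using a b c A1 B1 by simp
    thus False using ab by simp
  qed
  show ?thesis apply (rule exI[of _ cl]) using Qc Qe dist by simp
qed

lemma quad_form:
  fixes X :: "real mat"
  assumes v: "v \<in> carrier_vec n" and X: "X \<in> carrier_mat n n"
  shows "v \<bullet> (X *\<^sub>v v) = (\<Sum>a<n. \<Sum>b<n. v$a * X$$(a,b) * v$b)"
  using v X by (simp add: scalar_prod_def atLeast0LessThan sum_distrib_left ac_simps)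

lemma sum_delta_r:
  fixes g :: "nat \<Rightarrow> real"
  assumes "a < n"
  shows "(\<Sum>j<n. g j * (if j = a then 1 else 0)) = g a" "(\<Sum>j<n. (if j = a then 1 else 0) * g j) = g a"
proof -
  have "(\<Sum>j<n. g j * (if j = a then 1 else 0)) = (\<Sum>j<n. if j = a then g j else 0)" by (rule sum.cong) auto
  thus "(\<Sum>j<n. g j * (if j = a then 1 else 0)) = g a" using assms by simp
  have "(\<Sum>j<n. (if j = a then 1 else 0) * g j) = (\<Sum>j<n. if j = a then g j else 0)" by (rule sum.cong) auto
  thus "(\<Sum>j<n. (if j = a then 1 else 0) * g j) = g a" using assms by simp
qed

lemma psd_le1:
  assumes P: "psd n X" and D: "\<forall>l<n. X$$(l,l) = 1" and a: "a < n" and b: "b < n"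
  shows "X$$(a,b) \<le> 1"
proof (cases "a = b")
  case True thus ?thesis using D a by simp
next
  case False
  have Xc: "X \<in> carrier_mat n n" and sym: "X\<^sup>T = X" and nn: "\<forall>v\<in>carrier_vec n. 0 \<le> v \<bullet> (X *\<^sub>v v)"
    using P unfolding psd_def by auto
  have Xba: "X$$(b,a) = X$$(a,b)" using sym Xc a b by (metis carrier_matD index_transpose_mat(1))
  define f where "f i = (if i = a then 1 else 0) - (if i = b then 1 else (0::real))" for i
  define v where "v = vec n f"
  have v: "v \<in> carrier_vec n" unfolding v_def by simp
  have "0 \<le> v \<bullet> (X *\<^sub>v v)" using nn v by auto
  also have "\<dots> = (\<Sum>i<n. \<Sum>j<n. v$i * X$$(i,j) * v$j)" by (rule quad_form[OF v Xc])
  also have "\<dots> = (\<Sum>i<n. \<Sum>j<n. f i * X$$(i,j) * f j)" unfolding v_def by (intro sum.cong refl) auto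
  also have "\<dots> = (\<Sum>i<n. f i * (\<Sum>j<n. X$$(i,j) * f j))" by (simp add: sum_distrib_left ac_simps)
  also have "\<dots> = (\<Sum>i<n. f i * (X$$(i,a) - X$$(i,b)))"
  proof (rule sum.cong[OF refl])
    fix i
    have "(\<Sum>j<n. X$$(i,j) * f j) = (\<Sum>j<n. X$$(i,j) * (if j = a then 1 else 0)) - (\<Sum>j<n. X$$(i,j) * (if j = b then 1 else 0))"
      unfolding f_def right_diff_distrib sum_subtractf ..
    also have "\<dots> = X$$(i,a) - X$$(i,b)" using sum_delta_r(1)[OF a] sum_delta_r(1)[OF b] by simp
    finally show "f i * (\<Sum>j<n. X$$(i,j) * f j) = f i * (X$$(i,a) - X$$(i,b))" by simp
  qed
  also have "\<dots> = (\<Sum>i<n. (if i = a then 1 else 0) * (X$$(i,a) - X$$(i,b))) - (\<Sum>i<n. (if i = b then 1 else 0) * (X$$(i,a) - X$$(i,b)))"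
    unfolding f_def left_diff_distrib sum_subtractf ..
  also have "\<dots> = (X$$(a,a) - X$$(a,b)) - (X$$(b,a) - X$$(b,b))"
    using sum_delta_r(2)[OF a] sum_delta_r(2)[OF b] by simp
  finally show ?thesis using D a b Xba by simp
qed

lemma class_split:
  fixes g :: "nat \<Rightarrow> nat \<Rightarrow> real" and p :: "nat \<Rightarrow> 'c"
  shows "(\<Sum>a<n. \<Sum>b<n. if p a = p b then g a b else 0)
     = (\<Sum>s\<in>p ` {..<n}. \<Sum>a<n. \<Sum>b<n. if p a = s \<and> p b = s then g a b else 0)"
proof -
  have "(\<Sum>s\<in>p ` {..<n}. \<Sum>a<n. \<Sum>b<n. if p a = s \<and> p b = s then g a b else 0)
    = (\<Sum>a<n. \<Sum>b<n. \<Sum>s\<in>p ` {..<n}. if p a = s \<and> p b = s then g a b else 0)"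
  proof -
    have "(\<Sum>s\<in>p ` {..<n}. \<Sum>a<n. \<Sum>b<n. if p a = s \<and> p b = s then g a b else 0)
      = (\<Sum>a<n. \<Sum>s\<in>p ` {..<n}. \<Sum>b<n. if p a = s \<and> p b = s then g a b else 0)" by (rule sum.swap)
    also have "\<dots> = (\<Sum>a<n. \<Sum>b<n. \<Sum>s\<in>p ` {..<n}. if p a = s \<and> p b = s then g a b else 0)"
      by (rule sum.cong[OF refl], rule sum.swap)
    finally show ?thesis .
  qed
  also have "\<dots> = (\<Sum>a<n. \<Sum>b<n. if p a = p b then g a b else 0)"
  proof (rule sum.cong[OF refl], rule sum.cong[OF refl])
    fix a b assume a: "a \<in> {..<n}" and "b \<in> {..<n}"
    have "(\<Sum>s\<in>p ` {..<n}. if p a = s \<and> p b = s then g a b else 0)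
       = (\<Sum>s\<in>p ` {..<n}. if s = p a then (if p b = p a then g a b else 0) else 0)"
      by (rule sum.cong) auto
    also have "\<dots> = (if p a = p b then g a b else 0)" using a by (simp add: sum.delta' eq_commute)
    finally show "(\<Sum>s\<in>p ` {..<n}. if p a = s \<and> p b = s then g a b else 0) = (if p a = p b then g a b else 0)" .
  qed
  finally show ?thesis by simp
qed

definition pinch :: "nat \<Rightarrow> (nat \<Rightarrow> nat) \<Rightarrow> real mat \<Rightarrow> real mat" where
  "pinch n cl X = mat n n (\<lambda>(a,b). if cl a = cl b then X$$(a,b) else 0)"

lemma pinch_psd:
  assumes P: "psd n X"
  shows "psd n (pinch n cl X)"
proof -
  have Xc: "X \<in> carrier_mat n n" and sym: "X\<^sup>T = X" and nn: "\<forall>v\<in>carrier_vec n. 0 \<le> v \<bullet> (X *\<^sub>v v)"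
    using P unfolding psd_def by auto
  have Zc: "pinch n cl X \<in> carrier_mat n n" unfolding pinch_def by simp
  have Zsym: "(pinch n cl X)\<^sup>T = pinch n cl X"
  proof (rule eq_matI)
    fix i j assume "i < dim_row (pinch n cl X)" "j < dim_col (pinch n cl X)"
    hence i: "i < n" and j: "j < n" unfolding pinch_def by auto
    have "X$$(j,i) = X$$(i,j)" using sym Xc i j by (metis carrier_matD index_transpose_mat(1))
    thus "(pinch n cl X)\<^sup>T $$ (i,j) = pinch n cl X $$ (i,j)" using i j unfolding pinch_def by auto
  qed (auto simp: pinch_def)
  have Znn: "0 \<le> v \<bullet> (pinch n cl X *\<^sub>v v)" if v: "v \<in> carrier_vec n" for v
  proof -
    have "v \<bullet> (pinch n cl X *\<^sub>v v) = (\<Sum>a<n. \<Sum>b<n. v$a * pinch n cl X $$(a,b) * v$b)"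
      by (rule quad_form[OF v Zc])
    also have "\<dots> = (\<Sum>a<n. \<Sum>b<n. if cl a = cl b then v$a * X$$(a,b) * v$b else 0)"
      by (intro sum.cong refl) (auto simp: pinch_def)
    also have "\<dots> = (\<Sum>s\<in>cl ` {..<n}. \<Sum>a<n. \<Sum>b<n. if cl a = s \<and> cl b = s then v$a * X$$(a,b) * v$b else 0)"
      by (rule class_split)
    also have "\<dots> \<ge> 0"
    proof (rule sum_nonneg)
      fix s assume "s \<in> cl ` {..<n}"
      define w where "w = vec n (\<lambda>a. if cl a = s then v$a else 0)"
      have w: "w \<in> carrier_vec n" unfolding w_def by simp
      have "0 \<le> w \<bullet> (X *\<^sub>v w)" using nn w by auto
      also have "\<dots> = (\<Sum>a<n. \<Sum>b<n. w$a * X$$(a,b) * w$b)" by (rule quad_form[OF w Xc])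
      also have "\<dots> = (\<Sum>a<n. \<Sum>b<n. if cl a = s \<and> cl b = s then v$a * X$$(a,b) * v$b else 0)"
        by (intro sum.cong refl) (auto simp: w_def)
      finally show "0 \<le> (\<Sum>a<n. \<Sum>b<n. if cl a = s \<and> cl b = s then v$a * X$$(a,b) * v$b else 0)" .
    qed
    finally show ?thesis .
  qed
  show ?thesis unfolding psd_def using Zc Zsym Znn by auto
qed

lemma class_psd:
  "psd n (mat n n (\<lambda>(a,b). if cl a = cl b then 1 else (0::real)))"
proof -
  let ?Y = "mat n n (\<lambda>(a,b). if cl a = cl b then 1 else (0::real))"
  have Yc: "?Y \<in> carrier_mat n n" by simp
  have Ysym: "?Y\<^sup>T = ?Y" by (rule eq_matI) auto
  have "0 \<le> v \<bullet> (?Y *\<^sub>v v)" if v: "v \<in> carrier_vec n" for v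
  proof -
    have "v \<bullet> (?Y *\<^sub>v v) = (\<Sum>a<n. \<Sum>b<n. v$a * ?Y $$(a,b) * v$b)" by (rule quad_form[OF v Yc])
    also have "\<dots> = (\<Sum>a<n. \<Sum>b<n. if cl a = cl b then v$a * v$b else 0)"
      by (intro sum.cong refl) auto
    also have "\<dots> \<ge> 0" by (rule class_sq_nonneg)
    finally show ?thesis .
  qed
  thus ?thesis unfolding psd_def using Yc Ysym by auto
qed

lemma good_feasible:
  fixes Y :: "real mat" and cl :: "nat \<Rightarrow> nat"
  assumes P: "psd L Y" and D: "\<forall>l<L. Y$$(l,l) = 1"
    and Z: "\<forall>a<L. \<forall>b<L. cl a \<noteq> cl b \<longrightarrow> Y$$(a,b) = 0"
    and blocks: "\<forall>i<N. \<forall>a<K i. \<forall>b<K i. a \<noteq> b \<longrightarrow> cl (blk_off K i + a) \<noteq> cl (blk_off K i + b)"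
    and Kpos: "\<forall>i<N. K i > 0" and L: "L = (\<Sum>i<N. K i)"
  shows "strong_feasible N K L Y \<and> weak_feasible N K L Y \<and> gw_feasible L Y"
proof -
  have db: "diag_block Y K i = 1\<^sub>m (K i)" if i: "i < N" for i
  proof (rule eq_matI)
    fix a b assume "a < dim_row (1\<^sub>m (K i))" "b < dim_col (1\<^sub>m (K i))"
    hence a: "a < K i" and b: "b < K i" by auto
    have ra: "blk_off K i + a < L" and rb: "blk_off K i + b < L" unfolding L using blk_lt i a b by auto
    show "diag_block Y K i $$ (a,b) = 1\<^sub>m (K i) $$ (a,b)"
    proof (cases "a = b")
      case True thus ?thesis using D ra a b unfolding diag_block_def by auto
    next
      case False
      hence "cl (blk_off K i + a) \<noteq> cl (blk_off K i + b)" using blocks i a b by blast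
      hence "Y $$ (blk_off K i + a, blk_off K i + b) = 0" using Z ra rb by blast
      thus ?thesis using False a b unfolding diag_block_def by auto
    qed
  qed (auto simp: diag_block_def)
  have strong: "strong_feasible N K L Y" unfolding strong_feasible_def using P db by auto
  have wk: "mat_trace (diag_block Y K i * ((1 / real (K i)) \<cdot>\<^sub>m mat (K i) (K i) (\<lambda>_. 1))) = 1"
    if i: "i < N" for i
  proof -
    have Jc: "(1 / real (K i)) \<cdot>\<^sub>m mat (K i) (K i) (\<lambda>_. 1) \<in> carrier_mat (K i) (K i)" by simp
    have "diag_block Y K i * ((1 / real (K i)) \<cdot>\<^sub>m mat (K i) (K i) (\<lambda>_. 1))
        = (1 / real (K i)) \<cdot>\<^sub>m mat (K i) (K i) (\<lambda>_. 1)" unfolding db[OF i] using Jc by simp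
    hence "mat_trace (diag_block Y K i * ((1 / real (K i)) \<cdot>\<^sub>m mat (K i) (K i) (\<lambda>_. 1)))
       = (\<Sum>a<K i. 1 / real (K i))" unfolding mat_trace_def by simp
    also have "\<dots> = 1" using Kpos i by simp
    finally show ?thesis .
  qed
  have weak: "weak_feasible N K L Y" unfolding weak_feasible_def using P D wk by auto
  have gw: "gw_feasible L Y" unfolding gw_feasible_def using P D by auto
  show ?thesis using strong weak gw by auto
qed

lemma strong_gw:
  assumes S: "strong_feasible N K L X" and L: "L = (\<Sum>i<N. K i)"
  shows "gw_feasible L X"
proof -
  have P: "psd L X" and db: "\<forall>i<N. diag_block X K i = 1\<^sub>m (K i)" using S unfolding strong_feasible_def by auto
  have "X$$(l,l) = 1" if l: "l < L" for l
  proof -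
    obtain i a where i: "i < N" and a: "a < K i" and la: "l = blk_off K i + a"
      using blk_decomp[OF l[unfolded L]] by blast
    have "diag_block X K i $$ (a,a) = 1\<^sub>m (K i) $$ (a,a)" using db i by simp
    thus ?thesis using a la unfolding diag_block_def by simp
  qed
  thus ?thesis unfolding gw_feasible_def using P by auto
qed

lemma weak_gw: "weak_feasible N K L X \<Longrightarrow> gw_feasible L X"
  unfolding weak_feasible_def gw_feasible_def by auto

lemma trace_negQ:
  fixes Q X :: "real mat" and cl :: "nat \<Rightarrow> nat"
  assumes Qc: "Q \<in> carrier_mat L L" and Qe: "\<forall>r<L. \<forall>s<L. Q $$ (r,s) = (if cl r = cl s then 1 else 0)"
    and Xc: "X \<in> carrier_mat L L"
  shows "mat_trace ((- Q) * X) = - (\<Sum>a<L. \<Sum>b<L. if cl a = cl b then X$$(b,a) else 0)"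
proof -
  have "mat_trace ((- Q) * X) = (\<Sum>a<L. \<Sum>b<L. (- Q)$$(a,b) * X$$(b,a))"
    unfolding mat_trace_def using Qc Xc by (simp add: scalar_prod_def atLeast0LessThan sum_negf)
  also have "\<dots> = (\<Sum>a<L. \<Sum>b<L. - (if cl a = cl b then X$$(b,a) else 0))"
    using Qc Qe by (intro sum.cong refl) auto
  also have "\<dots> = - (\<Sum>a<L. \<Sum>b<L. if cl a = cl b then X$$(b,a) else 0)"
    by (simp add: sum_negf)
  finally show ?thesis .
qed

lemma eig_bounds:
  fixes X U :: "real mat"
  assumes P: "psd L X" and D: "\<forall>l<L. X$$(l,l) = 1"
    and U: "orth L U" and DU: "U\<^sup>T * X * U = diagm L d"
  shows "\<forall>j<L. 0 \<le> d j \<and> d j \<le> real L" and "mat_trace X = real L"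
proof -
  have Xc: "X \<in> carrier_mat L L" and nn: "\<forall>v\<in>carrier_vec L. 0 \<le> v \<bullet> (X *\<^sub>v v)"
    using P unfolding psd_def by auto
  have Uc: "U \<in> carrier_mat L L" using U unfolding orth_def by auto
  have d0: "0 \<le> d j" if j: "j < L" for j
  proof -
    have "col U j \<in> carrier_vec L" using Uc by (auto intro!: carrier_vecI)
    thus ?thesis using spec_diag[OF U Xc DU j] nn by auto
  qed
  show tr: "mat_trace X = real L" unfolding mat_trace_def using Xc D by simp
  have sd: "(\<Sum>k<L. d k) = real L" using spec_trace[OF U Xc DU] tr by simp
  have "d j \<le> real L" if j: "j < L" for j
  proof -
    have "d j \<le> (\<Sum>k<L. d k)" using j d0 by (intro member_le_sum) auto
    thus ?thesis using sd by simp
  qed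
  thus "\<forall>j<L. 0 \<le> d j \<and> d j \<le> real L" using d0 by auto
qed

lemma phi_ge: "0 \<le> x \<Longrightarrow> phi x \<ge> x - 1"
proof (cases "x = 0")
  case True thus ?thesis by (simp add: phi_def)
next
  case False
  assume x: "0 \<le> x"
  hence xp: "x > 0" using False by auto
  have "ln (1/x) \<le> 1/x - 1" using xp by (intro ln_le_minus_one) auto
  hence "- ln x \<le> 1/x - 1" using xp by (simp add: ln_div)
  hence "x * (- ln x) \<le> x * (1/x - 1)" using xp by (intro mult_left_mono) auto
  hence "x - 1 \<le> x * ln x" using xp by (simp add: algebra_simps)
  thus ?thesis using False by (simp add: phi_def)
qed

lemma minimizer_cross_zero:
  fixes F :: "real mat \<Rightarrow> bool" and Q X :: "real mat" and cl :: "nat \<Rightarrow> nat" and \<beta> :: real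
  assumes Lpos: "L > 0" and Qc: "Q \<in> carrier_mat L L"
    and Qe: "\<forall>r<L. \<forall>s<L. Q $$ (r,s) = (if cl r = cl s then 1 else 0)"
    and FZ: "\<forall>Y. F Y \<longrightarrow> F (pinch L cl Y)" and Fgw: "\<forall>Y. F Y \<longrightarrow> gw_feasible L Y"
    and min: "is_minimizer F (reg_objective (- Q) \<beta>) X" and bp: "\<beta> > 0"
  shows "\<forall>a<L. \<forall>b<L. cl a \<noteq> cl b \<longrightarrow> X$$(a,b) = 0"
proof -
  have FX: "F X" using min unfolding is_minimizer_def by auto
  have P: "psd L X" and D: "\<forall>l<L. X$$(l,l) = 1" using Fgw FX unfolding gw_feasible_def by auto
  have Xc: "X \<in> carrier_mat L L" and Xsym: "X\<^sup>T = X" using P unfolding psd_def by auto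
  define Z where "Z = pinch L cl X"
  have FZ': "F Z" unfolding Z_def using FZ FX by auto
  have PZ: "psd L Z" unfolding Z_def by (rule pinch_psd[OF P])
  have Zc: "Z \<in> carrier_mat L L" and Zsym: "Z\<^sup>T = Z" using PZ unfolding psd_def by auto
  have Ze: "Z$$(a,b) = (if cl a = cl b then X$$(a,b) else 0)" if "a < L" "b < L" for a b
    unfolding Z_def pinch_def using that by simp
  have DZ: "\<forall>l<L. Z$$(l,l) = 1" using D Ze by simp
  have "reg_objective (- Q) \<beta> X \<le> reg_objective (- Q) \<beta> Z" using min FZ' unfolding is_minimizer_def by auto
  moreover have "mat_trace ((- Q) * X) = mat_trace ((- Q) * Z)"
  proof -
    have "(\<Sum>a<L. \<Sum>b<L. if cl a = cl b then X$$(b,a) else 0) = (\<Sum>a<L. \<Sum>b<L. if cl a = cl b then Z$$(b,a) else 0)"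
      using Ze by (intro sum.cong refl) auto
    thus ?thesis using trace_negQ[OF Qc Qe Xc] trace_negQ[OF Qc Qe Zc] by simp
  qed
  ultimately have "(1 / \<beta>) * vn_entropy X \<le> (1 / \<beta>) * vn_entropy Z" unfolding reg_objective_def by simp
  hence SXZ: "vn_entropy X \<le> vn_entropy Z" using bp by (simp add: divide_le_cancel)
  obtain U d where U: "orth L U" and DU: "U\<^sup>T * X * U = diagm L d" using spectral[OF Xc Xsym] by blast
  obtain V z where V: "orth L V" and DV: "V\<^sup>T * Z * V = diagm L z" using spectral[OF Zc Zsym] by blast
  have db: "\<forall>j<L. 0 \<le> d j \<and> d j \<le> real L" and trX: "mat_trace X = real L" using eig_bounds[OF P D U DU] by auto
  have zb: "\<forall>j<L. 0 \<le> z j \<and> z j \<le> real L" and trZ: "mat_trace Z = real L" using eig_bounds[OF PZ DZ V DV] by auto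
  have "(\<Sum>k<L. phi (d k)) \<le> (\<Sum>k<L. phi (z k))"
    using SXZ spec_entropy[OF U Xc DU] spec_entropy[OF V Zc DV] trX trZ by simp
  moreover have "(\<Sum>k<L. phi (z k)) + (1/(2*real L)) * (\<Sum>j<L. (d j)^2) \<le> (\<Sum>j<L. phi (d j)) + (1/(2*real L)) * (\<Sum>k<L. (z k)^2)"
    by (rule pinch_ineq[OF U Xc DU V Zc DV]) (use Ze db zb in auto)
  ultimately have "(1/(2*real L)) * (\<Sum>j<L. (d j)^2) \<le> (1/(2*real L)) * (\<Sum>k<L. (z k)^2)" by linarith
  hence "(\<Sum>j<L. (d j)^2) \<le> (\<Sum>k<L. (z k)^2)" using Lpos by (simp add: divide_le_cancel)
  hence FR: "(\<Sum>a<L. \<Sum>b<L. (X$$(a,b))^2) \<le> (\<Sum>a<L. \<Sum>b<L. (Z$$(a,b))^2)"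
    using spec_frob[OF U Xc DU] spec_frob[OF V Zc DV] by simp
  have "(\<Sum>a<L. \<Sum>b<L. (X$$(a,b))^2) - (\<Sum>a<L. \<Sum>b<L. (Z$$(a,b))^2)
      = (\<Sum>a<L. \<Sum>b<L. if cl a = cl b then 0 else (X$$(a,b))^2)"
    by (simp add: sum_subtractf[symmetric] Ze) (intro sum.cong refl, auto)
  hence S0: "(\<Sum>a<L. \<Sum>b<L. if cl a = cl b then 0 else (X$$(a,b))^2) \<le> 0" using FR by simp
  have nn: "\<forall>a\<in>{..<L}. 0 \<le> (\<Sum>b<L. if cl a = cl b then 0 else (X$$(a,b))^2)"
    by (auto intro!: sum_nonneg)
  have "(\<Sum>a<L. \<Sum>b<L. if cl a = cl b then 0 else (X$$(a,b))^2) = 0"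
    using S0 nn by (meson order_antisym sum_nonneg)
  hence "\<forall>a\<in>{..<L}. (\<Sum>b<L. if cl a = cl b then 0 else (X$$(a,b))^2) = 0"
    using nn by (subst sum_nonneg_eq_0_iff[symmetric]) auto
  hence "\<forall>a\<in>{..<L}. \<forall>b\<in>{..<L}. (if cl a = cl b then 0 else (X$$(a,b))^2) = 0"
    by (subst (asm) sum_nonneg_eq_0_iff) auto
  thus ?thesis by (metis lessThan_iff power_eq_0_iff)
qed

lemma minimizer_bound:
  fixes F :: "real mat \<Rightarrow> bool" and Q X :: "real mat" and cl :: "nat \<Rightarrow> nat" and \<beta> :: real
  assumes Qc: "Q \<in> carrier_mat L L"
    and Qe: "\<forall>r<L. \<forall>s<L. Q $$ (r,s) = (if cl r = cl s then 1 else 0)"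
    and FQ: "F Q" and Fgw: "\<forall>Y. F Y \<longrightarrow> gw_feasible L Y"
    and min: "is_minimizer F (reg_objective (- Q) \<beta>) X" and bp: "\<beta> > 0"
    and a: "a < L" and b: "b < L" and ab: "cl a = cl b"
  shows "1 - (vn_entropy Q + real L) / \<beta> \<le> X$$(a,b) \<and> X$$(a,b) \<le> 1"
proof -
  have FX: "F X" using min unfolding is_minimizer_def by auto
  have P: "psd L X" and D: "\<forall>l<L. X$$(l,l) = 1" using Fgw FX unfolding gw_feasible_def by auto
  have Xc: "X \<in> carrier_mat L L" and Xsym: "X\<^sup>T = X" using P unfolding psd_def by auto
  have le1: "\<And>r s. r < L \<Longrightarrow> s < L \<Longrightarrow> X$$(r,s) \<le> 1" using psd_le1[OF P D] by auto
  obtain U d where U: "orth L U" and DU: "U\<^sup>T * X * U = diagm L d" using spectral[OF Xc Xsym] by blast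
  have db: "\<forall>j<L. 0 \<le> d j \<and> d j \<le> real L" and trX: "mat_trace X = real L" using eig_bounds[OF P D U DU] by auto
  have sd: "(\<Sum>k<L. d k) = real L" using spec_trace[OF U Xc DU] trX by simp
  have "(\<Sum>k<L. phi (d k)) \<ge> (\<Sum>k<L. d k - 1)" using db phi_ge by (intro sum_mono) auto
  hence "(\<Sum>k<L. phi (d k)) \<ge> 0" using sd by (simp add: sum_subtractf)
  hence SX: "vn_entropy X \<ge> - real L" using spec_entropy[OF U Xc DU] trX by simp
  have "reg_objective (- Q) \<beta> X \<le> reg_objective (- Q) \<beta> Q" using min FQ unfolding is_minimizer_def by auto
  hence "- (\<Sum>i<L. \<Sum>j<L. if cl i = cl j then X$$(j,i) else 0) + (1/\<beta>) * vn_entropy X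
      \<le> - (\<Sum>i<L. \<Sum>j<L. if cl i = cl j then Q$$(j,i) else 0) + (1/\<beta>) * vn_entropy Q"
    unfolding reg_objective_def trace_negQ[OF Qc Qe Xc] trace_negQ[OF Qc Qe Qc] .
  moreover have "(1/\<beta>) * vn_entropy X \<ge> (1/\<beta>) * (- real L)" using SX bp by (intro mult_left_mono) auto
  ultimately have "(\<Sum>i<L. \<Sum>j<L. if cl i = cl j then Q$$(j,i) else 0) - (\<Sum>i<L. \<Sum>j<L. if cl i = cl j then X$$(j,i) else 0)
      \<le> (1/\<beta>) * (vn_entropy Q + real L)" by (simp add: algebra_simps)
  moreover have "(\<Sum>i<L. \<Sum>j<L. if cl i = cl j then Q$$(j,i) else 0) - (\<Sum>i<L. \<Sum>j<L. if cl i = cl j then X$$(j,i) else 0)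
      = (\<Sum>i<L. \<Sum>j<L. if cl i = cl j then 1 - X$$(j,i) else 0)"
    by (simp add: sum_subtractf[symmetric]) (intro sum.cong refl, auto simp: Qe)
  ultimately have B: "(\<Sum>i<L. \<Sum>j<L. if cl i = cl j then 1 - X$$(j,i) else 0) \<le> (vn_entropy Q + real L) / \<beta>" by simp
  have nn: "\<And>i j. i < L \<Longrightarrow> j < L \<Longrightarrow> 0 \<le> (if cl i = cl j then 1 - X$$(j,i) else 0)" using le1 by auto
  have "(if cl b = cl a then 1 - X$$(a,b) else 0) \<le> (\<Sum>j<L. if cl b = cl j then 1 - X$$(j,b) else 0)"
    using a nn b by (intro member_le_sum[of a "{..<L}" "\<lambda>j. if cl b = cl j then 1 - X$$(j,b) else 0"]) auto
  also have "\<dots> \<le> (\<Sum>i<L. \<Sum>j<L. if cl i = cl j then 1 - X$$(j,i) else 0)"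
    using b nn by (intro member_le_sum[of b "{..<L}" "\<lambda>i. \<Sum>j<L. if cl i = cl j then 1 - X$$(j,i) else 0"] sum_nonneg) auto
  finally have "1 - X$$(a,b) \<le> (vn_entropy Q + real L) / \<beta>" using B ab by simp
  thus ?thesis using le1[OF a b] by simp
qed

lemma main_limit:
  fixes F :: "real mat \<Rightarrow> bool" and Q :: "real mat" and cl :: "nat \<Rightarrow> nat" and Xf :: "real \<Rightarrow> real mat"
  assumes Lpos: "L > 0" and Qc: "Q \<in> carrier_mat L L"
    and Qe: "\<forall>r<L. \<forall>s<L. Q $$ (r,s) = (if cl r = cl s then 1 else 0)"
    and FQ: "F Q" and FZ: "\<forall>Y. F Y \<longrightarrow> F (pinch L cl Y)" and Fgw: "\<forall>Y. F Y \<longrightarrow> gw_feasible L Y"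
    and min: "\<forall>\<beta>>0. is_minimizer F (reg_objective (- Q) \<beta>) (Xf \<beta>)"
  shows "mat_tendsto_at_top Xf Q"
proof -
  have dQ: "dim_row Q = L" "dim_col Q = L" using Qc by auto
  define C where "C = vn_entropy Q + real L"
  have carr: "\<forall>\<^sub>F \<beta> in at_top. Xf \<beta> \<in> carrier_mat L L"
  proof (rule eventually_mono[OF eventually_gt_at_top[of 0]])
    fix \<beta> :: real assume "0 < \<beta>"
    hence "F (Xf \<beta>)" using min unfolding is_minimizer_def by auto
    thus "Xf \<beta> \<in> carrier_mat L L" using Fgw unfolding gw_feasible_def psd_def by auto
  qed
  have lim: "((\<lambda>\<beta>. Xf \<beta> $$ (r,c)) \<longlongrightarrow> Q $$ (r,c)) at_top" if r: "r < L" and c: "c < L" for r c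
  proof (cases "cl r = cl c")
    case True
    have Q1: "Q $$ (r,c) = 1" using Qe r c True by simp
    have lo: "\<forall>\<^sub>F \<beta> in at_top. 1 - C / \<beta> \<le> Xf \<beta> $$ (r,c)"
      using eventually_gt_at_top[of 0]
      by eventually_elim (use minimizer_bound[OF Qc Qe FQ Fgw _ _ r c True] min in \<open>auto simp: C_def\<close>)
    have hi: "\<forall>\<^sub>F \<beta> in at_top. Xf \<beta> $$ (r,c) \<le> 1"
      using eventually_gt_at_top[of 0]
      by eventually_elim (use minimizer_bound[OF Qc Qe FQ Fgw _ _ r c True] min in \<open>auto simp: C_def\<close>)
    have t1: "((\<lambda>\<beta>::real. 1 - C / \<beta>) \<longlongrightarrow> 1) at_top"
    proof -
      have "((\<lambda>\<beta>::real. C / \<beta>) \<longlongrightarrow> 0) at_top"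
        by (rule tendsto_divide_0[OF tendsto_const filterlim_at_top_imp_at_infinity[OF filterlim_ident]])
      hence "((\<lambda>\<beta>::real. 1 - C / \<beta>) \<longlongrightarrow> 1 - 0) at_top" by (intro tendsto_diff tendsto_const)
      thus ?thesis by simp
    qed
    have "((\<lambda>\<beta>. Xf \<beta> $$ (r,c)) \<longlongrightarrow> 1) at_top"
      by (rule tendsto_sandwich[OF lo hi t1 tendsto_const])
    thus ?thesis using Q1 by simp
  next
    case False
    have Q0: "Q $$ (r,c) = 0" using Qe r c False by simp
    have "\<forall>\<^sub>F \<beta> in at_top. Xf \<beta> $$ (r,c) = 0"
      using eventually_gt_at_top[of 0]
      by eventually_elim (use minimizer_cross_zero[OF Lpos Qc Qe FZ Fgw] min r c False in auto)
    hence "((\<lambda>\<beta>. Xf \<beta> $$ (r,c)) \<longlongrightarrow> 0) at_top" by (rule tendsto_eventually)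
    thus ?thesis using Q0 by simp
  qed
  show ?thesis unfolding mat_tendsto_at_top_def dQ using carr lim by auto
qed

theorem theorem2:
  fixes N M :: nat and K :: "nat \<Rightarrow> nat" and Ps :: "nat \<Rightarrow> real mat"
    and Xs Xw Xg :: "real \<Rightarrow> real mat"
  assumes "N \<ge> 1" and "M \<ge> 1"
    and "\<forall>i<N. K i > 0"
    and "\<forall>i<N. Ps i \<in> carrier_mat (K i) M \<and> row_partial_perm (Ps i)"
  defines "L \<equiv> (\<Sum>i<N. K i)"
    and "Q \<equiv> stack_mats Ps M N * transpose_mat (stack_mats Ps M N)"
  shows "((\<forall>\<beta>>0. is_minimizer (strong_feasible N K L) (reg_objective (- Q) \<beta>) (Xs \<beta>))
            \<longrightarrow> mat_tendsto_at_top Xs Q)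
       \<and> ((\<forall>\<beta>>0. is_minimizer (weak_feasible N K L) (reg_objective (- Q) \<beta>) (Xw \<beta>))
            \<longrightarrow> mat_tendsto_at_top Xw Q)
       \<and> ((\<forall>\<beta>>0. is_minimizer (gw_feasible L) (reg_objective (- Q) \<beta>) (Xg \<beta>))
            \<longrightarrow> mat_tendsto_at_top Xg Q)"
proof -
  obtain cl :: "nat \<Rightarrow> nat" where Qc: "Q \<in> carrier_mat L L"
    and Qe: "\<forall>r<L. \<forall>s<L. Q $$ (r,s) = (if cl r = cl s then 1 else 0)"
    and blocks: "\<forall>i<N. \<forall>a<K i. \<forall>b<K i. a \<noteq> b \<longrightarrow> cl (blk_off K i + a) \<noteq> cl (blk_off K i + b)"
    using class_fun[OF assms(4), folded L_def Q_def] by blast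
  have Kpos: "\<forall>i<N. K i > 0" using assms(3) .
  have Lpos: "L > 0"
  proof -
    have "K 0 \<le> L" unfolding L_def using assms(1) by (intro member_le_sum) auto
    moreover have "K 0 > 0" using assms(1) assms(3) by simp
    ultimately show ?thesis by linarith
  qed
  have good: "strong_feasible N K L Y \<and> weak_feasible N K L Y \<and> gw_feasible L Y"
    if P: "psd L Y" and D: "\<forall>l<L. Y$$(l,l) = 1" and Z: "\<forall>a<L. \<forall>b<L. cl a \<noteq> cl b \<longrightarrow> Y$$(a,b) = 0" for Y
    by (rule good_feasible[OF P D Z blocks Kpos meta_eq_to_obj_eq[OF L_def]])
  have Qmat: "Q = mat L L (\<lambda>(a,b). if cl a = cl b then 1 else 0)"
    by (rule eq_matI) (use Qc Qe in auto)
  have goodQ: "strong_feasible N K L Q \<and> weak_feasible N K L Q \<and> gw_feasible L Q"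
  proof (rule good)
    show "psd L Q" unfolding Qmat by (rule class_psd)
    show "\<forall>l<L. Q$$(l,l) = 1" using Qe by simp
    show "\<forall>a<L. \<forall>b<L. cl a \<noteq> cl b \<longrightarrow> Q$$(a,b) = 0" using Qe by simp
  qed
  have goodZ: "strong_feasible N K L (pinch L cl Y) \<and> weak_feasible N K L (pinch L cl Y) \<and> gw_feasible L (pinch L cl Y)"
    if G: "gw_feasible L Y" for Y
  proof (rule good)
    have P: "psd L Y" and D: "\<forall>l<L. Y$$(l,l) = 1" using G unfolding gw_feasible_def by auto
    show "psd L (pinch L cl Y)" by (rule pinch_psd[OF P])
    show "\<forall>l<L. pinch L cl Y $$(l,l) = 1" using D unfolding pinch_def by simp
    show "\<forall>a<L. \<forall>b<L. cl a \<noteq> cl b \<longrightarrow> pinch L cl Y $$(a,b) = 0" unfolding pinch_def by simp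
  qed
  have sgw: "\<forall>Y. strong_feasible N K L Y \<longrightarrow> gw_feasible L Y" using strong_gw[OF _ meta_eq_to_obj_eq[OF L_def]] by blast
  have wgw: "\<forall>Y. weak_feasible N K L Y \<longrightarrow> gw_feasible L Y" using weak_gw by blast
  have ggw: "\<forall>Y. gw_feasible L Y \<longrightarrow> gw_feasible L Y" by blast
  have FZs: "\<forall>Y. strong_feasible N K L Y \<longrightarrow> strong_feasible N K L (pinch L cl Y)"
    using goodZ sgw by blast
  have FZw: "\<forall>Y. weak_feasible N K L Y \<longrightarrow> weak_feasible N K L (pinch L cl Y)"
    using goodZ wgw by blast
  have FZg: "\<forall>Y. gw_feasible L Y \<longrightarrow> gw_feasible L (pinch L cl Y)"
    using goodZ by blast
  have FQs: "strong_feasible N K L Q" and FQw: "weak_feasible N K L Q" and FQg: "gw_feasible L Q"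
    using goodQ by auto
  show ?thesis
  proof (intro conjI impI)
    assume "\<forall>\<beta>>0. is_minimizer (strong_feasible N K L) (reg_objective (- Q) \<beta>) (Xs \<beta>)"
    thus "mat_tendsto_at_top Xs Q" by (rule main_limit[OF Lpos Qc Qe FQs FZs sgw])
  next
    assume "\<forall>\<beta>>0. is_minimizer (weak_feasible N K L) (reg_objective (- Q) \<beta>) (Xw \<beta>)"
    thus "mat_tendsto_at_top Xw Q" by (rule main_limit[OF Lpos Qc Qe FQw FZw wgw])
  next
    assume "\<forall>\<beta>>0. is_minimizer (gw_feasible L) (reg_objective (- Q) \<beta>) (Xg \<beta>)"
    thus "mat_tendsto_at_top Xg Q" by (rule main_limit[OF Lpos Qc Qe FQg FZg ggw])
  qed
qed

end
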